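(* Let $r_1,r_2,r_3,L,M>0$ with $r_2>\max(r_1,r_3)$, and let $\lambda_1$, $\varphi_1$, $F$ be as in the context. Let $c_A>2\sqrt{-\lambda_1}$, let $0<T\le+\infty$, and let $A\in\mathcal C(\mathbb{R},[0,+\infty))$ with $A(t)=c_At$ for $t\in[0,T)$. Let $r(t,x)=r_1$ if $x<A(t)$, $r_2$ if $A(t)\le x<A(t)+L$, $r_3$ if $x\ge A(t)+L$, and let $f$ be globally bounded in $(t,x)$, $\mathcal C^2$ in $u$, with $f(t,x,0)=0$, $\partial_uf(t,x,0)=r(t,x)$, $r(t,x)u\ge f(t,x,u)\ge r(t,x)u-Mu^2$ for $u\ge0$, and $f(t,x,u)<0$ for $u>1$. Let $c=F(c_A)$ if $c_A<2\sqrt{r_1}+2\sqrt{-\lambda_1-r_1}$ and $c=2\sqrt{r_1}$ if $c_A\ge2\sqrt{r_1}+2\sqrt{-\lambda_1-r_1}$, let $\lambda(c)=\frac12(c-\sqrt{c^2-4r_1})$, and define $$\overline{u}(t,x)=\begin{cases}2 & x\le ct-\frac{\ln2}{\lambda(c)},\\ e^{-\lambda(c)(x-ct)} & ct-\frac{\ln 2}{\lambda(c)}<x<c_At,\\ e^{-\lambda(c)(c_A-c)t}e^{-\frac{c_A(x-c_At)}{2}}\varphi_1\big(\frac{x-c_At}{L}\big) & x\ge c_At.\end{cases}$$ Then for every constant $C\ge1$, $C\overline{u}$ is a (generalized) super-solution of $\partial_tu=\partial_{xx}u+f(t,x,u)$ for $t\in[0,T)$, $x\in\mathbb{R}$.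
   Context: Let $\underline{L}=0$ if $r_1=r_3$ and $\underline{L}=\frac{1}{\sqrt{r_2-\max(r_1,r_3)}}\operatorname{arccot}\big(\sqrt{\frac{r_2-\max(r_1,r_3)}{|r_1-r_3|}}\big)$ otherwise ($\operatorname{arccot}$ the inverse of $\cot|_{(0,\pi)}$). $\lambda_1=-\max(r_1,r_3)$ if $L\le\underline{L}$; if $L>\underline{L}$, $\lambda_1$ is the unique solution in $(-r_2,\min(-\max(r_1,r_3),\pi^2/L^2-r_2))$ of $\cot(L\sqrt{r_2+\lambda_1})=\frac{r_2+\lambda_1-\sqrt{(r_1+\lambda_1)(r_3+\lambda_1)}}{\sqrt{r_2+\lambda_1}(\sqrt{-r_1-\lambda_1}+\sqrt{-r_3-\lambda_1})}$. $F(c)=\frac{c-2\sqrt{-\lambda_1-r_1}}{2}+\frac{2r_1}{c-2\sqrt{-\lambda_1-r_1}}$ for $c>2\sqrt{-\lambda_1-r_1}$. The function $\varphi_1$ (a positive $\mathcal C^1$ solution of $-L^{-2}\varphi''-m\varphi=\lambda_1\varphi$ with $m=r_1\mathbf 1_{y<0}+r_2\mathbf 1_{0\le y<1}+r_3\mathbf 1_{y\ge1}$, normalized by $\varphi_1(0)=1$) is: (1) if $L>\underline{L}$: with $C_3\in(0,\pi/2)$ given by $\cot C_3=\sqrt{(-r_1-\lambda_1)/(r_2+\lambda_1)}$, $\varphi_1(y)=e^{L\sqrt{-r_1-\lambda_1}\,y}$ for $y\le0$, $\varphi_1(y)=\sin(L\sqrt{r_2+\lambda_1}\,y+C_3)/\sin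 C_3$ for $0<y<1$, $\varphi_1(y)=\frac{\sin(L\sqrt{r_2+\lambda_1}+C_3)}{\sin C_3}e^{-L\sqrt{-r_3-\lambda_1}(y-1)}$ for $y\ge1$; (2) if $r_1<r_3$ and $L\le\underline{L}$ (so $\lambda_1=-r_3$): with $C_3\in(0,\pi/2)$, $\cot C_3=\sqrt{(r_3-r_1)/(r_2-r_3)}$, $\varphi_1(y)=e^{L\sqrt{r_3-r_1}\,y}$ for $y\le0$, $\sin(L\sqrt{r_2-r_3}\,y+C_3)/\sin C_3$ for $0<y<1$, and $\frac{\sin(L\sqrt{r_2-r_3}+C_3)}{\sin C_3}+\frac{\sqrt{r_2-r_3}\cos(L\sqrt{r_2-r_3}+C_3)}{\sin C_3}L(y-1)$ for $y\ge1$; (3) if $r_1>r_3$ and $L\le\underline{L}$ (so $\lambda_1=-r_1$): $\varphi_1(y)=\psi(1-y)/\psi(1)$ where $\psi$ is the function of case (2) with $r_1$ and $r_3$ interchanged. A (generalized) super-solution is a continuous function, smooth on finitely many space-time regions separated by $\mathcal C^1$ curves, satisfying $\partial_t\overline u\ge\partial_{xx}\overline u+f(t,x,\overline u)$ in each region and $\partial_x\overline u(t,x^-)\ge\partial_x\overline u(t,x^+)$ across each interface. *)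

theory Defs
  imports "HOL-Analysis.Analysis" "HOL-Library.Extended_Real"
begin

text \<open>arccot is the inverse of cot restricted to (0,pi): arccot y = pi/2 - arctan y.\<close>
definition arccot :: "real \<Rightarrow> real" where
  "arccot y = pi / 2 - arctan y"

definition Lbar :: "real \<Rightarrow> real \<Rightarrow> real \<Rightarrow> real" where
  "Lbar r1 r2 r3 =
     (if r1 = r3 then 0
      else 1 / sqrt (r2 - max r1 r3) * arccot (sqrt ((r2 - max r1 r3) / \<bar>r1 - r3\<bar>)))"

definition lambda1 :: "real \<Rightarrow> real \<Rightarrow> real \<Rightarrow> real \<Rightarrow> real" where
  "lambda1 r1 r2 r3 L =
     (if L \<le> Lbar r1 r2 r3 then - max r1 r3
      else (THE l. - r2 < l \<and> l < min (- max r1 r3) (pi\<^sup>2 / L\<^sup>2 - r2) \<and>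
              cot (L * sqrt (r2 + l)) =
                (r2 + l - sqrt ((r1 + l) * (r3 + l))) /
                (sqrt (r2 + l) * (sqrt (- r1 - l) + sqrt (- r3 - l)))))"

text \<open>F(c), depending on r1 and lambda1 (passed as parameter lam).\<close>
definition Ffun :: "real \<Rightarrow> real \<Rightarrow> real \<Rightarrow> real" where
  "Ffun r1 lam c = (c - 2 * sqrt (- lam - r1)) / 2 + 2 * r1 / (c - 2 * sqrt (- lam - r1))"

text \<open>Case (2) profile (r1 < r3, L \<le> Lbar, lambda1 = -r3).\<close>
definition phi_case2 :: "real \<Rightarrow> real \<Rightarrow> real \<Rightarrow> real \<Rightarrow> real \<Rightarrow> real" where
  "phi_case2 r1 r2 r3 L y =
     (let C3 = arccot (sqrt ((r3 - r1) / (r2 - r3))); k = sqrt (r2 - r3) in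
      if y \<le> 0 then exp (L * sqrt (r3 - r1) * y)
      else if y < 1 then sin (L * k * y + C3) / sin C3
      else sin (L * k + C3) / sin C3 + k * cos (L * k + C3) / sin C3 * L * (y - 1))"

definition phi1 :: "real \<Rightarrow> real \<Rightarrow> real \<Rightarrow> real \<Rightarrow> real \<Rightarrow> real" where
  "phi1 r1 r2 r3 L y =
     (if L > Lbar r1 r2 r3 then
        (let l = lambda1 r1 r2 r3 L;
             C3 = arccot (sqrt ((- r1 - l) / (r2 + l))); k = sqrt (r2 + l) in
         if y \<le> 0 then exp (L * sqrt (- r1 - l) * y)
         else if y < 1 then sin (L * k * y + C3) / sin C3
         else sin (L * k + C3) / sin C3 * exp (- L * sqrt (- r3 - l) * (y - 1)))
      else if r1 < r3 then phi_case2 r1 r2 r3 L y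
      else phi_case2 r3 r2 r1 L (1 - y) / phi_case2 r3 r2 r1 L 1)"

definition time_dom :: "ereal \<Rightarrow> real set" where
  "time_dom T = {t. 0 \<le> t \<and> ereal t < T}"

definition classical_super_at ::
  "(real \<Rightarrow> real \<Rightarrow> real) \<Rightarrow> (real \<Rightarrow> real \<Rightarrow> real \<Rightarrow> real) \<Rightarrow> ereal \<Rightarrow> real \<Rightarrow> real \<Rightarrow> bool" where
  "classical_super_at u f T t x \<longleftrightarrow>
     (\<exists>e>0. \<exists>Ut Ux Uxx :: real \<Rightarrow> real \<Rightarrow> real.
        (let N = {(s, y). s \<in> time_dom T \<and> \<bar>s - t\<bar> < e \<and> \<bar>y - x\<bar> < e} in
         (\<forall>(s, y) \<in> N.
            ((\<lambda>s'. u s' y) has_real_derivative Ut s y) (at s within time_dom T) \<and>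
            ((\<lambda>y'. u s y') has_real_derivative Ux s y) (at y) \<and>
            ((\<lambda>y'. Ux s y') has_real_derivative Uxx s y) (at y)) \<and>
         continuous_on N (\<lambda>(s, y). Ut s y) \<and>
         continuous_on N (\<lambda>(s, y). Ux s y) \<and>
         continuous_on N (\<lambda>(s, y). Uxx s y)) \<and>
        Ut t x \<ge> Uxx t x + f t x (u t x))"

definition gen_supersolution ::
  "(real \<Rightarrow> real \<Rightarrow> real) \<Rightarrow> (real \<Rightarrow> real \<Rightarrow> real \<Rightarrow> real) \<Rightarrow> ereal \<Rightarrow> bool" where
  "gen_supersolution u f T \<longleftrightarrow>
     continuous_on (time_dom T \<times> UNIV) (\<lambda>(t, x). u t x) \<and>
     (\<exists>gs :: (real \<Rightarrow> real) list.
        (\<forall>g \<in> set gs. \<exists>g'. (\<forall>t \<in> time_dom T. (g has_real_derivative g' t) (at t within time_dom T))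
                          \<and> continuous_on (time_dom T) g') \<and>
        (\<forall>t \<in> time_dom T. \<forall>i. Suc i < length gs \<longrightarrow> (gs ! i) t < (gs ! Suc i) t) \<and>
        (\<forall>t \<in> time_dom T. \<forall>x. (\<forall>g \<in> set gs. x \<noteq> g t) \<longrightarrow> classical_super_at u f T t x) \<and>
        (\<forall>t \<in> time_dom T. \<forall>g \<in> set gs. \<exists>dl dr.
            ((\<lambda>h. (u t (g t + h) - u t (g t)) / h) \<longlongrightarrow> dl) (at_left 0) \<and>
            ((\<lambda>h. (u t (g t + h) - u t (g t)) / h) \<longlongrightarrow> dr) (at_right 0) \<and>
            dl \<ge> dr))"

definition lam_c :: "real \<Rightarrow> real \<Rightarrow> real" where
  "lam_c r1 c = (c - sqrt (c\<^sup>2 - 4 * r1)) / 2"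

definition speed_c :: "real \<Rightarrow> real \<Rightarrow> real \<Rightarrow> real \<Rightarrow> real \<Rightarrow> real" where
  "speed_c r1 r2 r3 L cA =
     (let l = lambda1 r1 r2 r3 L in
      if cA < 2 * sqrt r1 + 2 * sqrt (- l - r1) then Ffun r1 l cA else 2 * sqrt r1)"

definition ubar :: "real \<Rightarrow> real \<Rightarrow> real \<Rightarrow> real \<Rightarrow> real \<Rightarrow> real \<Rightarrow> real \<Rightarrow> real" where
  "ubar r1 r2 r3 L cA t x =
     (let c = speed_c r1 r2 r3 L cA; lc = lam_c r1 c in
      if x \<le> c * t - ln 2 / lc then 2
      else if x < cA * t then exp (- lc * (x - c * t))
      else exp (- lc * (cA - c) * t) * exp (- cA * (x - cA * t) / 2)
             * phi1 r1 r2 r3 L ((x - cA * t) / L))"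

end

theory Submission
  imports Defs
begin

lemma box_in_ball:
  fixes s t y x e :: real
  assumes "\<bar>s - t\<bar> < e" "\<bar>y - x\<bar> < e"
  shows "(s, y) \<in> ball (t, x) (2 * e)"
proof -
  have "dist (t, x) (s, y) = sqrt ((t - s)\<^sup>2 + (x - y)\<^sup>2)"
    by (simp add: dist_Pair_Pair dist_real_def)
  also have "\<dots> \<le> \<bar>t - s\<bar> + \<bar>x - y\<bar>" by (rule sqrt_sum_squares_le_sum_abs)
  also have "\<dots> < 2 * e" using assms by linarith
  finally show ?thesis by simp
qed

lemma classical_from_smooth:
  fixes u U Ut Ux Uxx :: "real \<Rightarrow> real \<Rightarrow> real" and f :: "real \<Rightarrow> real \<Rightarrow> real \<Rightarrow> real"
  assumes W: "open W" "(t, x) \<in> W" and eq: "\<And>s y. (s, y) \<in> W \<Longrightarrow> u s y = U s y"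
    and dt: "\<And>s y. ((\<lambda>s. U s y) has_real_derivative Ut s y) (at s)"
    and dx: "\<And>s y. ((\<lambda>y. U s y) has_real_derivative Ux s y) (at y)"
    and dxx: "\<And>s y. ((\<lambda>y. Ux s y) has_real_derivative Uxx s y) (at y)"
    and ct: "continuous_on UNIV (\<lambda>p. Ut (fst p) (snd p))"
    and cx: "continuous_on UNIV (\<lambda>p. Ux (fst p) (snd p))"
    and cxx: "continuous_on UNIV (\<lambda>p. Uxx (fst p) (snd p))"
    and ineq: "Ut t x \<ge> Uxx t x + f t x (U t x)"
  shows "classical_super_at u f T t x"
proof -
  obtain e0 where e0: "e0 > 0" "ball (t, x) e0 \<subseteq> W"
    using W open_contains_ball by blast
  define e where "e = e0 / 2"
  have e: "e > 0" using e0 by (simp add: e_def)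
  define N where "N = {(s, y). s \<in> time_dom T \<and> \<bar>s - t\<bar> < e \<and> \<bar>y - x\<bar> < e}"
  have NO: "p \<in> W" if "p \<in> N" for p
  proof -
    obtain s y where p: "p = (s, y)" by force
    have "(s, y) \<in> ball (t, x) (2 * e)" using that p N_def box_in_ball by auto
    then show ?thesis using e0 p e_def by auto
  qed
  have D: "((\<lambda>s'. u s' y) has_real_derivative Ut s y) (at s within time_dom T) \<and>
            ((\<lambda>y'. u s y') has_real_derivative Ux s y) (at y) \<and>
            ((\<lambda>y'. Ux s y') has_real_derivative Uxx s y) (at y)" if "(s, y) \<in> W" for s y
  proof (intro conjI)
    have o1: "open ((\<lambda>s'. (s', y)) -` W)"
      by (rule open_vimage[OF W(1)]) (intro continuous_intros)
    have "((\<lambda>s'. u s' y) has_real_derivative Ut s y) (at s)"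
      by (rule has_field_derivative_transform_within_open[OF dt o1]) (use that eq in auto)
    then show "((\<lambda>s'. u s' y) has_real_derivative Ut s y) (at s within time_dom T)"
      by (rule has_field_derivative_at_within)
    have o2: "open ((\<lambda>y'. (s, y')) -` W)"
      by (rule open_vimage[OF W(1)]) (intro continuous_intros)
    show "((\<lambda>y'. u s y') has_real_derivative Ux s y) (at y)"
      by (rule has_field_derivative_transform_within_open[OF dx o2]) (use that eq in auto)
    show "((\<lambda>y'. Ux s y') has_real_derivative Uxx s y) (at y)" by (rule dxx)
  qed
  have "(\<forall>(s, y) \<in> N.
            ((\<lambda>s'. u s' y) has_real_derivative Ut s y) (at s within time_dom T) \<and>
            ((\<lambda>y'. u s y') has_real_derivative Ux s y) (at y) \<and>
            ((\<lambda>y'. Ux s y') has_real_derivative Uxx s y) (at y))"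
    using D NO by blast
  moreover have "continuous_on N (\<lambda>(s, y). Ut s y)"
    using continuous_on_subset[OF ct] by (simp add: split_def)
  moreover have "continuous_on N (\<lambda>(s, y). Ux s y)"
    using continuous_on_subset[OF cx] by (simp add: split_def)
  moreover have "continuous_on N (\<lambda>(s, y). Uxx s y)"
    using continuous_on_subset[OF cxx] by (simp add: split_def)
  moreover have "u t x = U t x" using eq W by auto
  ultimately have "(let N = {(s, y). s \<in> time_dom T \<and> \<bar>s - t\<bar> < e \<and> \<bar>y - x\<bar> < e} in
         (\<forall>(s, y) \<in> N.
            ((\<lambda>s'. u s' y) has_real_derivative Ut s y) (at s within time_dom T) \<and>
            ((\<lambda>y'. u s y') has_real_derivative Ux s y) (at y) \<and>
            ((\<lambda>y'. Ux s y') has_real_derivative Uxx s y) (at y)) \<and>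
         continuous_on N (\<lambda>(s, y). Ut s y) \<and>
         continuous_on N (\<lambda>(s, y). Ux s y) \<and>
         continuous_on N (\<lambda>(s, y). Uxx s y)) \<and>
        Ut t x \<ge> Uxx t x + f t x (u t x)"
    unfolding Let_def N_def[symmetric] using ineq by simp
  then show ?thesis unfolding classical_super_at_def using e by blast
qed



definition Rf :: "real \<Rightarrow> real \<Rightarrow> real \<Rightarrow> real \<Rightarrow> real \<Rightarrow> (real \<Rightarrow> real) \<Rightarrow> real \<Rightarrow> real \<Rightarrow> real" where
  "Rf C lam cA c L g s y = C * (exp (- lam * (cA - c) * s) * exp (- cA * (y - cA * s) / 2) * g ((y - cA * s) / L))"
definition Rt :: "real \<Rightarrow> real \<Rightarrow> real \<Rightarrow> real \<Rightarrow> real \<Rightarrow> (real \<Rightarrow> real) \<Rightarrow> (real \<Rightarrow> real) \<Rightarrow> real \<Rightarrow> real \<Rightarrow> real" where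
  "Rt C lam cA c L g g' s y = C * (exp (- lam * (cA - c) * s) * exp (- cA * (y - cA * s) / 2) *
      ((- lam * (cA - c) + cA\<^sup>2 / 2) * g ((y - cA * s) / L) - cA / L * g' ((y - cA * s) / L)))"
definition Rx :: "real \<Rightarrow> real \<Rightarrow> real \<Rightarrow> real \<Rightarrow> real \<Rightarrow> (real \<Rightarrow> real) \<Rightarrow> (real \<Rightarrow> real) \<Rightarrow> real \<Rightarrow> real \<Rightarrow> real" where
  "Rx C lam cA c L g g' s y = C * (exp (- lam * (cA - c) * s) * exp (- cA * (y - cA * s) / 2) *
      (- cA / 2 * g ((y - cA * s) / L) + g' ((y - cA * s) / L) / L))"
definition Rxx :: "real \<Rightarrow> real \<Rightarrow> real \<Rightarrow> real \<Rightarrow> real \<Rightarrow> real \<Rightarrow> (real \<Rightarrow> real) \<Rightarrow> (real \<Rightarrow> real) \<Rightarrow> real \<Rightarrow> real \<Rightarrow> real" where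
  "Rxx C lam cA c L K g g' s y = C * (exp (- lam * (cA - c) * s) * exp (- cA * (y - cA * s) / 2) *
      ((cA\<^sup>2 / 4 + K / L\<^sup>2) * g ((y - cA * s) / L) - cA / L * g' ((y - cA * s) / L)))"

lemma R_derivs:
  fixes g g' :: "real \<Rightarrow> real"
  assumes g: "\<And>y. (g has_real_derivative g' y) (at y)"
    and g': "\<And>y. (g' has_real_derivative K * g y) (at y)" and L: "L \<noteq> 0"
  shows "((\<lambda>s. Rf C lam cA c L g s y) has_real_derivative Rt C lam cA c L g g' s y) (at s)"
    and "((\<lambda>y. Rf C lam cA c L g s y) has_real_derivative Rx C lam cA c L g g' s y) (at y)"
    and "((\<lambda>y. Rx C lam cA c L g g' s y) has_real_derivative Rxx C lam cA c L K g g' s y) (at y)"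
    and "continuous_on UNIV (\<lambda>p. Rt C lam cA c L g g' (fst p) (snd p))"
    and "continuous_on UNIV (\<lambda>p. Rx C lam cA c L g g' (fst p) (snd p))"
    and "continuous_on UNIV (\<lambda>p. Rxx C lam cA c L K g g' (fst p) (snd p))"
proof -
  have gd: "((\<lambda>x. g (h x)) has_real_derivative g' (h x) * h') (at x)"
    if "(h has_real_derivative h') (at x)" for h h' x
    using DERIV_chain2[OF g that] .
  have g'd: "((\<lambda>x. g' (h x)) has_real_derivative K * g (h x) * h') (at x)"
    if "(h has_real_derivative h') (at x)" for h h' x
    using DERIV_chain2[OF g' that] .
  show "((\<lambda>s. Rf C lam cA c L g s y) has_real_derivative Rt C lam cA c L g g' s y) (at s)"
  proof -
    have h1: "((\<lambda>s. g ((y - cA * s) / L)) has_real_derivative g' ((y - cA * s) / L) * (- cA / L)) (at s)"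
      by (rule gd) (auto intro!: derivative_eq_intros simp: field_simps L)
    have e1: "((\<lambda>s. exp (- lam * (cA - c) * s)) has_real_derivative exp (- lam * (cA - c) * s) * (- lam * (cA - c))) (at s)"
      by (auto intro!: derivative_eq_intros)
    have e2: "((\<lambda>s. exp (- cA * (y - cA * s) / 2)) has_real_derivative exp (- cA * (y - cA * s) / 2) * (cA\<^sup>2 / 2)) (at s)"
      by (auto intro!: derivative_eq_intros simp: power2_eq_square)
    note DERIV_cmult[OF DERIV_mult[OF DERIV_mult[OF e1 e2] h1], of C]
    then show ?thesis unfolding Rf_def
      by (rule DERIV_cong) (simp add: Rt_def algebra_simps)
  qed
  show "((\<lambda>y. Rf C lam cA c L g s y) has_real_derivative Rx C lam cA c L g g' s y) (at y)"
  proof -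
    have h1: "((\<lambda>y. g ((y - cA * s) / L)) has_real_derivative g' ((y - cA * s) / L) * (1 / L)) (at y)"
      by (rule gd) (auto intro!: derivative_eq_intros simp: field_simps L)
    have e2: "((\<lambda>y. exp (- cA * (y - cA * s) / 2)) has_real_derivative exp (- cA * (y - cA * s) / 2) * (- cA / 2)) (at y)"
      by (auto intro!: derivative_eq_intros simp: power2_eq_square)
    note DERIV_cmult[OF DERIV_cmult[OF DERIV_mult[OF e2 h1]], of C "exp (- lam * (cA - c) * s)"]
    then show ?thesis unfolding Rf_def mult.assoc[symmetric]
      by (rule DERIV_cong) (simp add: Rx_def algebra_simps)
  qed
  show "((\<lambda>y. Rx C lam cA c L g g' s y) has_real_derivative Rxx C lam cA c L K g g' s y) (at y)"
  proof -
    have h1: "((\<lambda>y. g ((y - cA * s) / L)) has_real_derivative g' ((y - cA * s) / L) * (1 / L)) (at y)"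
      by (rule gd) (auto intro!: derivative_eq_intros simp: field_simps L)
    have h2: "((\<lambda>y. g' ((y - cA * s) / L)) has_real_derivative K * g ((y - cA * s) / L) * (1 / L)) (at y)"
      by (rule g'd) (auto intro!: derivative_eq_intros simp: field_simps L)
    have e2: "((\<lambda>y. exp (- cA * (y - cA * s) / 2)) has_real_derivative exp (- cA * (y - cA * s) / 2) * (- cA / 2)) (at y)"
      by (auto intro!: derivative_eq_intros simp: power2_eq_square)
    have h3: "((\<lambda>y. - cA / 2 * g ((y - cA * s) / L) + g' ((y - cA * s) / L) / L) has_real_derivative
         - cA / 2 * (g' ((y - cA * s) / L) * (1 / L)) + K * g ((y - cA * s) / L) * (1 / L) / L) (at y)"
      by (intro DERIV_add DERIV_cmult DERIV_cdivide h1 h2)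
    note DERIV_cmult[OF DERIV_cmult[OF DERIV_mult[OF e2 h3]], of C "exp (- lam * (cA - c) * s)"]
    then show ?thesis unfolding Rx_def mult.assoc[symmetric]
      by (rule DERIV_cong) (simp add: Rxx_def algebra_simps power2_eq_square)
  qed
  have cg: "continuous_on UNIV g"
    using g by (meson DERIV_isCont continuous_at_imp_continuous_on)
  have cg': "continuous_on UNIV g'"
    using g' by (meson DERIV_isCont continuous_at_imp_continuous_on)
  have c1: "continuous_on UNIV (\<lambda>p::real\<times>real. g ((snd p - cA * fst p) / L))"
    by (rule continuous_on_compose2[OF cg]) (auto intro!: continuous_intros simp: L)
  have c2: "continuous_on UNIV (\<lambda>p::real\<times>real. g' ((snd p - cA * fst p) / L))"
    by (rule continuous_on_compose2[OF cg']) (auto intro!: continuous_intros simp: L)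
  show "continuous_on UNIV (\<lambda>p. Rt C lam cA c L g g' (fst p) (snd p))"
    unfolding Rt_def by (intro continuous_on_mult continuous_on_add continuous_on_diff continuous_on_minus continuous_on_divide continuous_on_const continuous_on_exp continuous_on_fst continuous_on_snd continuous_on_id c1 c2) (auto simp: L)
  show "continuous_on UNIV (\<lambda>p. Rx C lam cA c L g g' (fst p) (snd p))"
    unfolding Rx_def by (intro continuous_on_mult continuous_on_add continuous_on_diff continuous_on_minus continuous_on_divide continuous_on_const continuous_on_exp continuous_on_fst continuous_on_snd continuous_on_id c1 c2) (auto simp: L)
  show "continuous_on UNIV (\<lambda>p. Rxx C lam cA c L K g g' (fst p) (snd p))"
    unfolding Rxx_def by (intro continuous_on_mult continuous_on_add continuous_on_diff continuous_on_minus continuous_on_divide continuous_on_const continuous_on_exp continuous_on_fst continuous_on_snd continuous_on_id c1 c2) (auto simp: L)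
qed

lemma R_identity:
  assumes "L \<noteq> 0"
  shows "Rt C lam cA c L g g' s y - Rxx C lam cA c L K g g' s y - r * Rf C lam cA c L g s y
     = Rf C lam cA c L g s y * (- lam * (cA - c) + cA\<^sup>2 / 4 - K / L\<^sup>2 - r)"
  unfolding Rt_def Rxx_def Rf_def using assms by (simp add: field_simps power2_eq_square)

lemma quot_left:
  fixes F u :: "real \<Rightarrow> real"
  assumes "(F has_real_derivative D) (at x0)" "\<delta> > 0"
    "\<And>h. - \<delta> < h \<Longrightarrow> h < 0 \<Longrightarrow> u (x0 + h) = F (x0 + h)" "u x0 = F x0"
  shows "((\<lambda>h. (u (x0 + h) - u x0) / h) \<longlongrightarrow> D) (at_left 0)"
proof -
  have "((\<lambda>h. (F (x0 + h) - F x0) / h) \<longlongrightarrow> D) (at 0)"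
    using assms(1) by (simp add: DERIV_def)
  then have "((\<lambda>h. (F (x0 + h) - F x0) / h) \<longlongrightarrow> D) (at_left 0)"
    by (rule filterlim_mono) (simp_all add: at_le)
  moreover have "eventually (\<lambda>h. h \<in> {-\<delta><..<0}) (at_left (0::real))"
    using eventually_at_left_real[of "-\<delta>" 0] assms(2) by simp
  then have "eventually (\<lambda>h. (F (x0 + h) - F x0) / h = (u (x0 + h) - u x0) / h) (at_left (0::real))"
    by eventually_elim (use assms(3,4) in auto)
  ultimately show ?thesis by (rule Lim_transform_eventually)
qed

lemma quot_right:
  fixes F u :: "real \<Rightarrow> real"
  assumes "(F has_real_derivative D) (at x0)" "\<delta> > 0"
    "\<And>h. 0 < h \<Longrightarrow> h < \<delta> \<Longrightarrow> u (x0 + h) = F (x0 + h)" "u x0 = F x0"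
  shows "((\<lambda>h. (u (x0 + h) - u x0) / h) \<longlongrightarrow> D) (at_right 0)"
proof -
  have "((\<lambda>h. (F (x0 + h) - F x0) / h) \<longlongrightarrow> D) (at 0)"
    using assms(1) by (simp add: DERIV_def)
  then have "((\<lambda>h. (F (x0 + h) - F x0) / h) \<longlongrightarrow> D) (at_right 0)"
    by (rule filterlim_mono) (simp_all add: at_le)
  moreover have "eventually (\<lambda>h. h \<in> {0<..<\<delta>}) (at_right (0::real))"
    using eventually_at_right_real[of 0 "\<delta>"] assms(2) by simp
  then have "eventually (\<lambda>h. (F (x0 + h) - F x0) / h = (u (x0 + h) - u x0) / h) (at_right (0::real))"
    by eventually_elim (use assms(3,4) in auto)
  ultimately show ?thesis by (rule Lim_transform_eventually)
qed



lemma abstract_super: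
  fixes r1 r2 r3 L cA c lam l1 C :: real and T :: ereal
    and A :: "real \<Rightarrow> real" and f :: "real \<Rightarrow> real \<Rightarrow> real \<Rightarrow> real" and r :: "real \<Rightarrow> real \<Rightarrow> real"
    and pa pa' pb pb' Phi :: "real \<Rightarrow> real" and u :: "real \<Rightarrow> real \<Rightarrow> real"
  assumes r1: "r1 > 0" and L: "L > 0" and C: "C \<ge> 1" and lam: "lam > 0" and ccA: "c \<le> cA"
    and mid: "c * lam - lam\<^sup>2 - r1 \<ge> 0"
    and key: "cA\<^sup>2 / 4 + l1 - lam * (cA - c) \<ge> 0"
    and slope: "lam \<le> cA / 2 - pa' 0 / L"
    and da: "\<And>y. (pa has_real_derivative pa' y) (at y)"
    and dda: "\<And>y. (pa' has_real_derivative (- (L\<^sup>2) * (r2 + l1)) * pa y) (at y)"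
    and db: "\<And>y. (pb has_real_derivative pb' y) (at y)"
    and ddb: "\<And>y. (pb' has_real_derivative (- (L\<^sup>2) * (r3 + l1)) * pb y) (at y)"
    and pa0: "pa 0 = 1" and p1: "pa 1 = pb 1" and p1': "pa' 1 = pb' 1"
    and pos_a: "\<And>y. 0 \<le> y \<Longrightarrow> y \<le> 1 \<Longrightarrow> pa y > 0"
    and pos_b: "\<And>y. 1 \<le> y \<Longrightarrow> pb y > 0"
    and Phi: "\<And>y. 0 \<le> y \<Longrightarrow> Phi y = (if y < 1 then pa y else pb y)"
    and A_lin: "\<And>t. 0 \<le> t \<Longrightarrow> ereal t < T \<Longrightarrow> A t = cA * t"
    and r_def: "\<And>t x. r t x = (if x < A t then r1 else if x < A t + L then r2 else r3)"
    and f_upper: "\<And>t x u. u \<ge> 0 \<Longrightarrow> f t x u \<le> r t x * u"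
    and f_neg: "\<And>t x u. u > 1 \<Longrightarrow> f t x u < 0"
    and u_def: "u = (\<lambda>t x. C * (if x \<le> c * t - ln 2 / lam then 2 else if x < cA * t then exp (- lam * (x - c * t))
          else exp (- lam * (cA - c) * t) * exp (- cA * (x - cA * t) / 2) * Phi ((x - cA * t) / L)))"
  shows "gen_supersolution u f T"
proof -
  define g1 where "g1 = (\<lambda>t::real. c * t - ln 2 / lam)"
  have ln2: "ln 2 / lam > 0" using lam by simp
  have g1_lt: "g1 t < cA * t" if "0 \<le> t" for t
  proof -
    have "c * t \<le> cA * t" using ccA that by (simp add: mult_right_mono)
    then show ?thesis using ln2 by (simp add: g1_def)
  qed
  have exp_g1: "exp (- lam * (g1 t - c * t)) = 2" for t
    using lam by (simp add: g1_def)
  have Lne: "L \<noteq> 0" using L by simp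
  have C0: "C > 0" using C by simp
  have u1: "u s y = C * 2" if "y \<le> g1 s" for s y using that by (simp add: u_def g1_def)
  have u2: "u s y = C * exp (- lam * (y - c * s))" if "g1 s < y" "y < cA * s" for s y
    using that by (simp add: u_def g1_def)
  have u3: "u s y = Rf C lam cA c L pa s y" if "g1 s < y" "cA * s \<le> y" "y < cA * s + L" for s y
  proof -
    have z: "0 \<le> (y - cA * s) / L" "(y - cA * s) / L < 1" using that L by (auto simp: field_simps)
    show ?thesis using that z Phi[OF z(1)] by (simp add: u_def g1_def Rf_def)
  qed
  have u4: "u s y = Rf C lam cA c L pb s y" if "g1 s < y" "cA * s + L \<le> y" for s y
  proof -
    have z: "0 \<le> (y - cA * s) / L" "\<not> (y - cA * s) / L < 1" using that L by (auto simp: field_simps)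
    have "\<not> y < cA * s" using that L by simp
    then show ?thesis using that z Phi[OF z(1)] by (simp add: u_def g1_def Rf_def)
  qed
  define Q where "Q = (\<lambda>y. if y < 1 then pa y else pb y)"
  have cpa: "continuous_on UNIV pa" using da by (meson DERIV_isCont continuous_at_imp_continuous_on)
  have cpb: "continuous_on UNIV pb" using db by (meson DERIV_isCont continuous_at_imp_continuous_on)
  have cQ: "continuous_on UNIV Q"
  proof -
    have "continuous_on ({..1} \<union> {1..}) Q" unfolding Q_def
      by (rule continuous_on_cases) (use continuous_on_subset[OF cpa] continuous_on_subset[OF cpb] p1 in auto)
    moreover have "{..1::real} \<union> {1..} = UNIV" by auto
    ultimately show ?thesis by simp
  qed
  have cQ2: "continuous_on UNIV (\<lambda>p::real\<times>real. Q ((snd p - cA * fst p) / L))"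
    by (rule continuous_on_compose2[OF cQ]) (auto intro!: continuous_intros simp: Lne)
  define I where "I = (\<lambda>p::real\<times>real. if snd p < cA * fst p then exp (- lam * (snd p - c * fst p))
     else exp (- lam * (cA - c) * fst p) * exp (- cA * (snd p - cA * fst p) / 2) * Q ((snd p - cA * fst p) / L))"
  have cI: "continuous_on UNIV I"
  proof -
    have "continuous_on ({p. snd p \<le> cA * fst p} \<union> {p. cA * fst p \<le> snd p}) I" unfolding I_def
    proof (rule continuous_on_cases)
      show "closed {p::real\<times>real. snd p \<le> cA * fst p}"
        by (rule closed_Collect_le) (auto intro!: continuous_intros)
      show "closed {p::real\<times>real. cA * fst p \<le> snd p}"
        by (rule closed_Collect_le) (auto intro!: continuous_intros)
      show "continuous_on {p. snd p \<le> cA * fst p} (\<lambda>p::real\<times>real. exp (- lam * (snd p - c * fst p)))"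
        by (auto intro!: continuous_intros)
      show "continuous_on {p. cA * fst p \<le> snd p} (\<lambda>p::real\<times>real. exp (- lam * (cA - c) * fst p) * exp (- cA * (snd p - cA * fst p) / 2) * Q ((snd p - cA * fst p) / L))"
        by (intro continuous_on_mult continuous_on_subset[OF cQ2]) (auto intro!: continuous_intros)
      show "\<forall>p::real\<times>real. p \<in> {p. snd p \<le> cA * fst p} \<and> \<not> snd p < cA * fst p \<or> p \<in> {p. cA * fst p \<le> snd p} \<and> snd p < cA * fst p \<longrightarrow>
          exp (- lam * (snd p - c * fst p)) = exp (- lam * (cA - c) * fst p) * exp (- cA * (snd p - cA * fst p) / 2) * Q ((snd p - cA * fst p) / L)"
        by (auto simp: Q_def pa0 algebra_simps)
    qed
    moreover have "{p::real\<times>real. snd p \<le> cA * fst p} \<union> {p. cA * fst p \<le> snd p} = UNIV" by auto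
    ultimately show ?thesis by simp
  qed
  define J where "J = (\<lambda>p::real\<times>real. if snd p \<le> g1 (fst p) then 2 else I p)"
  have cJ: "continuous_on {p. 0 \<le> fst p} J"
  proof -
    have cg1: "continuous_on UNIV (\<lambda>p::real\<times>real. g1 (fst p))" unfolding g1_def by (auto intro!: continuous_intros)
    have "continuous_on ({p. 0 \<le> fst p} \<inter> {p. snd p \<le> g1 (fst p)} \<union> {p. 0 \<le> fst p} \<inter> {p. g1 (fst p) \<le> snd p}) J"
      unfolding J_def
    proof (rule continuous_on_cases)
      show "closed ({p::real\<times>real. 0 \<le> fst p} \<inter> {p. snd p \<le> g1 (fst p)})"
        by (intro closed_Int closed_Collect_le cg1) (auto intro!: continuous_intros)
      show "closed ({p::real\<times>real. 0 \<le> fst p} \<inter> {p. g1 (fst p) \<le> snd p})"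
        by (intro closed_Int closed_Collect_le cg1) (auto intro!: continuous_intros)
      show "continuous_on ({p::real\<times>real. 0 \<le> fst p} \<inter> {p. snd p \<le> g1 (fst p)}) (\<lambda>p. 2::real)"
        by simp
      show "continuous_on ({p::real\<times>real. 0 \<le> fst p} \<inter> {p. g1 (fst p) \<le> snd p}) I"
        by (rule continuous_on_subset[OF cI]) auto
      show "\<forall>p. p \<in> {p::real\<times>real. 0 \<le> fst p} \<inter> {p. snd p \<le> g1 (fst p)} \<and> \<not> snd p \<le> g1 (fst p) \<or>
          p \<in> {p. 0 \<le> fst p} \<inter> {p. g1 (fst p) \<le> snd p} \<and> snd p \<le> g1 (fst p) \<longrightarrow> 2 = I p"
      proof (intro allI impI)
        fix p :: "real \<times> real"
        assume "p \<in> {p. 0 \<le> fst p} \<inter> {p. snd p \<le> g1 (fst p)} \<and> \<not> snd p \<le> g1 (fst p) \<or>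
          p \<in> {p. 0 \<le> fst p} \<inter> {p. g1 (fst p) \<le> snd p} \<and> snd p \<le> g1 (fst p)"
        then have h: "0 \<le> fst p" "snd p = g1 (fst p)" by auto
        then have "snd p < cA * fst p" using g1_lt by simp
        then show "2 = I p" unfolding I_def using h exp_g1 by simp
      qed
    qed
    moreover have "{p::real\<times>real. 0 \<le> fst p} \<inter> {p. snd p \<le> g1 (fst p)} \<union> {p. 0 \<le> fst p} \<inter> {p. g1 (fst p) \<le> snd p}
        = {p. 0 \<le> fst p}" by auto
    ultimately show ?thesis by simp
  qed
  have uJ: "u t x = C * J (t, x)" for t x
  proof (cases "x < cA * t")
    case True then show ?thesis by (simp add: u_def J_def I_def g1_def)
  next
    case False
    then have z: "0 \<le> (x - cA * t) / L" using L by simp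
    show ?thesis using False Phi[OF z] by (simp add: u_def J_def I_def Q_def g1_def)
  qed
  have cont: "continuous_on (time_dom T \<times> UNIV) (\<lambda>(t, x). u t x)"
  proof -
    have "continuous_on {p. 0 \<le> fst p} (\<lambda>p. C * J p)" by (intro continuous_intros cJ)
    then have "continuous_on (time_dom T \<times> UNIV) (\<lambda>p. C * J p)"
      by (rule continuous_on_subset) (auto simp: time_dom_def)
    then show ?thesis by (simp add: split_def uJ)
  qed
  define gs where "gs = [g1, \<lambda>t. cA * t, \<lambda>t. cA * t + L]"
  have gs_deriv: "\<forall>g\<in>set gs. \<exists>g'. (\<forall>t\<in>time_dom T. (g has_real_derivative g' t) (at t within time_dom T)) \<and> continuous_on (time_dom T) g'"
  proof -
    have "\<exists>g'. (\<forall>t\<in>time_dom T. (g1 has_real_derivative g' t) (at t within time_dom T)) \<and> continuous_on (time_dom T) g'"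
      by (rule exI[of _ "\<lambda>_. c"]) (auto simp: g1_def intro!: derivative_eq_intros)
    moreover have "\<exists>g'. (\<forall>t\<in>time_dom T. ((\<lambda>t. cA * t) has_real_derivative g' t) (at t within time_dom T)) \<and> continuous_on (time_dom T) g'"
      by (rule exI[of _ "\<lambda>_. cA"]) (auto intro!: derivative_eq_intros)
    moreover have "\<exists>g'. (\<forall>t\<in>time_dom T. ((\<lambda>t. cA * t + L) has_real_derivative g' t) (at t within time_dom T)) \<and> continuous_on (time_dom T) g'"
      by (rule exI[of _ "\<lambda>_. cA"]) (auto intro!: derivative_eq_intros)
    ultimately show ?thesis by (simp add: gs_def)
  qed
  have gs_ord: "\<forall>t\<in>time_dom T. \<forall>i. Suc i < length gs \<longrightarrow> (gs ! i) t < (gs ! Suc i) t"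
  proof (intro ballI allI impI)
    fix t i assume t: "t \<in> time_dom T" and i: "Suc i < length gs"
    then have "i = 0 \<or> i = 1" by (auto simp: gs_def)
    moreover have "0 \<le> t" using t by (simp add: time_dom_def)
    ultimately show "(gs ! i) t < (gs ! Suc i) t" using g1_lt L by (auto simp: gs_def)
  qed
  have cg1: "continuous_on UNIV (\<lambda>p::real\<times>real. g1 (fst p))" unfolding g1_def by (auto intro!: continuous_intros)
  have cls: "\<forall>t\<in>time_dom T. \<forall>x. (\<forall>g\<in>set gs. x \<noteq> g t) \<longrightarrow> classical_super_at u f T t x"
  proof (intro ballI allI impI)
    fix t x assume t: "t \<in> time_dom T" and nx: "\<forall>g\<in>set gs. x \<noteq> g t"
    have t0: "0 \<le> t" and At: "A t = cA * t" using t A_lin by (auto simp: time_dom_def)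
    have nx': "x \<noteq> g1 t" "x \<noteq> cA * t" "x \<noteq> cA * t + L" using nx by (auto simp: gs_def)
    consider "x < g1 t" | "g1 t < x \<and> x < cA * t" | "cA * t < x \<and> x < cA * t + L" | "cA * t + L < x"
      using nx' by linarith
    then show "classical_super_at u f T t x"
    proof cases
      case 1
      have W: "open {p::real\<times>real. snd p < g1 (fst p)}"
        by (rule open_Collect_less) (auto intro!: continuous_intros cg1)
      have ineq: "(\<lambda>s y. 0) t x + f t x ((\<lambda>s y. C * 2) t x) \<le> (\<lambda>s y. 0::real) t x"
        using f_neg[of "C * 2" t x] C by simp
      show ?thesis
        by (rule classical_from_smooth[where f=f and t=t and x=x and U="\<lambda>s y. C * 2" and Ut="\<lambda>s y. 0" and Ux="\<lambda>s y. 0" and Uxx="\<lambda>s y. 0", OF W _ _ _ _ _ _ _ _ ineq]) (use 1 u1 in auto)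
    next
      case 2
      define W where "W = {p::real\<times>real. g1 (fst p) < snd p} \<inter> {p. snd p < cA * fst p}"
      have oW: "open W" unfolding W_def
        by (intro open_Int open_Collect_less) (auto intro!: continuous_intros cg1)
      define e where "e = exp (- lam * (x - c * t))"
      have e: "e > 0" by (simp add: e_def)
      have f2: "f t x (C * e) \<le> r1 * (C * e)"
        using f_upper[of "C * e" t x] e C 2 At r_def[of t x] by simp
      have id: "C * e * (lam * c) - (C * e * (lam * lam) + r1 * (C * e)) = C * e * (c * lam - lam\<^sup>2 - r1)"
        by (simp add: algebra_simps power2_eq_square)
      have "0 \<le> C * e * (c * lam - lam\<^sup>2 - r1)" using C e mid by simp
      then have ineq: "C * exp (- lam * (x - c * t)) * (lam * lam) + f t x (C * exp (- lam * (x - c * t))) \<le> C * exp (- lam * (x - c * t)) * (lam * c)"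
        using f2 id unfolding e_def[symmetric] by linarith
      show ?thesis
      proof (rule classical_from_smooth[where f=f and t=t and x=x and U="\<lambda>s y. C * exp (- lam * (y - c * s))" and Ut="\<lambda>s y. C * exp (- lam * (y - c * s)) * (lam * c)"
          and Ux="\<lambda>s y. C * exp (- lam * (y - c * s)) * - lam" and Uxx="\<lambda>s y. C * exp (- lam * (y - c * s)) * (lam * lam)", OF oW _ _ _ _ _ _ _ _ ineq])
        show "(t, x) \<in> W" using 2 by (simp add: W_def)
        show "u s y = C * exp (- lam * (y - c * s))" if "(s, y) \<in> W" for s y
          using that u2 by (simp add: W_def)
        show "((\<lambda>s. C * exp (- lam * (y - c * s))) has_real_derivative C * exp (- lam * (y - c * s)) * (lam * c)) (at s)" for s y
          by (auto intro!: derivative_eq_intros simp: algebra_simps)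
        show "((\<lambda>y. C * exp (- lam * (y - c * s))) has_real_derivative C * exp (- lam * (y - c * s)) * - lam) (at y)" for s y
          by (auto intro!: derivative_eq_intros simp: algebra_simps)
        show "((\<lambda>y. C * exp (- lam * (y - c * s)) * - lam) has_real_derivative C * exp (- lam * (y - c * s)) * (lam * lam)) (at y)" for s y
          by (auto intro!: derivative_eq_intros simp: algebra_simps)
      qed (auto intro!: continuous_intros)
    next
      case 3
      define W where "W = {p::real\<times>real. g1 (fst p) < snd p} \<inter> {p. cA * fst p < snd p} \<inter> {p. snd p < cA * fst p + L}"
      have oW: "open W" unfolding W_def
        by (intro open_Int open_Collect_less) (auto intro!: continuous_intros cg1)
      note RD = R_derivs[OF da dda Lne, where C=C and lam=lam and cA=cA and c=c]
      have z: "0 \<le> (x - cA * t) / L" "(x - cA * t) / L \<le> 1" using 3 L by (auto simp: field_simps)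
      have Rpos: "Rf C lam cA c L pa t x \<ge> 0"
        unfolding Rf_def using C pos_a[OF z] by simp
      have f3: "f t x (Rf C lam cA c L pa t x) \<le> r2 * Rf C lam cA c L pa t x"
        using f_upper[OF Rpos, of t x] 3 At r_def[of t x] by simp
      have kk: "- lam * (cA - c) + cA\<^sup>2 / 4 - (- (L\<^sup>2) * (r2 + l1)) / L\<^sup>2 - r2 = cA\<^sup>2 / 4 + l1 - lam * (cA - c)"
        using Lne by (simp add: field_simps)
      have "0 \<le> Rf C lam cA c L pa t x * (cA\<^sup>2 / 4 + l1 - lam * (cA - c))"
        using Rpos key by simp
      then have ineq: "Rxx C lam cA c L (- (L\<^sup>2) * (r2 + l1)) pa pa' t x + f t x (Rf C lam cA c L pa t x) \<le> Rt C lam cA c L pa pa' t x"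
        using R_identity[OF Lne, of C lam cA c pa pa' t x "- (L\<^sup>2) * (r2 + l1)" r2, unfolded kk] f3 by linarith
      show ?thesis
      proof (rule classical_from_smooth[where f=f and t=t and x=x, OF oW _ _ RD(1) RD(2) RD(3) RD(4) RD(5) RD(6) ineq])
        show "(t, x) \<in> W" using 3 g1_lt[OF t0] by (simp add: W_def)
        show "u s y = Rf C lam cA c L pa s y" if "(s, y) \<in> W" for s y
          using that u3 by (simp add: W_def)
      qed
    next
      case 4
      define W where "W = {p::real\<times>real. g1 (fst p) < snd p} \<inter> {p. cA * fst p + L < snd p}"
      have oW: "open W" unfolding W_def
        by (intro open_Int open_Collect_less) (auto intro!: continuous_intros cg1)
      note RD = R_derivs[OF db ddb Lne, where C=C and lam=lam and cA=cA and c=c]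
      have z: "1 \<le> (x - cA * t) / L" using 4 L by (auto simp: field_simps)
      have Rpos: "Rf C lam cA c L pb t x \<ge> 0"
        unfolding Rf_def using C pos_b[OF z] by simp
      have f4: "f t x (Rf C lam cA c L pb t x) \<le> r3 * Rf C lam cA c L pb t x"
        using f_upper[OF Rpos, of t x] 4 At r_def[of t x] L by simp
      have kk: "- lam * (cA - c) + cA\<^sup>2 / 4 - (- (L\<^sup>2) * (r3 + l1)) / L\<^sup>2 - r3 = cA\<^sup>2 / 4 + l1 - lam * (cA - c)"
        using Lne by (simp add: field_simps)
      have "0 \<le> Rf C lam cA c L pb t x * (cA\<^sup>2 / 4 + l1 - lam * (cA - c))"
        using Rpos key by simp
      then have ineq: "Rxx C lam cA c L (- (L\<^sup>2) * (r3 + l1)) pb pb' t x + f t x (Rf C lam cA c L pb t x) \<le> Rt C lam cA c L pb pb' t x"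
        using R_identity[OF Lne, of C lam cA c pb pb' t x "- (L\<^sup>2) * (r3 + l1)" r3, unfolded kk] f4 by linarith
      show ?thesis
      proof (rule classical_from_smooth[where f=f and t=t and x=x, OF oW _ _ RD(1) RD(2) RD(3) RD(4) RD(5) RD(6) ineq])
        show "(t, x) \<in> W" using 4 g1_lt[OF t0] L by (simp add: W_def)
        show "u s y = Rf C lam cA c L pb s y" if "(s, y) \<in> W" for s y
          using that u4 by (simp add: W_def)
      qed
    qed
  qed
  have jmp: "\<forall>t\<in>time_dom T. \<forall>g\<in>set gs. \<exists>dl dr.
            ((\<lambda>h. (u t (g t + h) - u t (g t)) / h) \<longlongrightarrow> dl) (at_left 0) \<and>
            ((\<lambda>h. (u t (g t + h) - u t (g t)) / h) \<longlongrightarrow> dr) (at_right 0) \<and>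
            dl \<ge> dr"
  proof (intro ballI)
    fix t g assume t: "t \<in> time_dom T" and g: "g \<in> set gs"
    have t0: "0 \<le> t" using t by (simp add: time_dom_def)
    have gt: "g1 t < cA * t" using g1_lt[OF t0] .
    have E: "exp (- lam * (cA * t - c * t)) = exp (- lam * (cA - c) * t)"
      by (simp add: algebra_simps)
    from g consider "g = g1" | "g = (\<lambda>t. cA * t)" | "g = (\<lambda>t. cA * t + L)" by (auto simp: gs_def)
    then show "\<exists>dl dr.
            ((\<lambda>h. (u t (g t + h) - u t (g t)) / h) \<longlongrightarrow> dl) (at_left 0) \<and>
            ((\<lambda>h. (u t (g t + h) - u t (g t)) / h) \<longlongrightarrow> dr) (at_right 0) \<and>
            dl \<ge> dr"
    proof cases
      case 1
      have l: "((\<lambda>h. (u t (g1 t + h) - u t (g1 t)) / h) \<longlongrightarrow> 0) (at_left 0)"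
        by (rule quot_left[where F="\<lambda>y. C * 2" and \<delta>=1]) (auto intro: u1)
      have r: "((\<lambda>h. (u t (g1 t + h) - u t (g1 t)) / h) \<longlongrightarrow> C * exp (- lam * (g1 t - c * t)) * - lam) (at_right 0)"
      proof (rule quot_right[where F="\<lambda>y. C * exp (- lam * (y - c * t))" and \<delta>="cA * t - g1 t"])
        show "((\<lambda>y. C * exp (- lam * (y - c * t))) has_real_derivative C * exp (- lam * (g1 t - c * t)) * - lam) (at (g1 t))"
          by (auto intro!: derivative_eq_intros)
        show "0 < cA * t - g1 t" using gt by simp
        show "u t (g1 t + h) = C * exp (- lam * (g1 t + h - c * t))" if "0 < h" "h < cA * t - g1 t" for h
          using that by (intro u2) auto
        show "u t (g1 t) = C * exp (- lam * (g1 t - c * t))" using u1[of "g1 t" t] exp_g1 by simp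
      qed
      have "C * exp (- lam * (g1 t - c * t)) * - lam \<le> 0" using C lam by simp
      then show ?thesis using l r 1 by blast
    next
      case 2
      have l: "((\<lambda>h. (u t (cA * t + h) - u t (cA * t)) / h) \<longlongrightarrow> C * exp (- lam * (cA * t - c * t)) * - lam) (at_left 0)"
      proof (rule quot_left[where F="\<lambda>y. C * exp (- lam * (y - c * t))" and \<delta>="cA * t - g1 t"])
        show "((\<lambda>y. C * exp (- lam * (y - c * t))) has_real_derivative C * exp (- lam * (cA * t - c * t)) * - lam) (at (cA * t))"
          by (auto intro!: derivative_eq_intros)
        show "0 < cA * t - g1 t" using gt by simp
        show "u t (cA * t + h) = C * exp (- lam * (cA * t + h - c * t))" if "- (cA * t - g1 t) < h" "h < 0" for h
          using that by (intro u2) auto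
        show "u t (cA * t) = C * exp (- lam * (cA * t - c * t))"
          using u3[of t "cA * t"] gt L E pa0 by (simp add: Rf_def algebra_simps)
      qed
      have r: "((\<lambda>h. (u t (cA * t + h) - u t (cA * t)) / h) \<longlongrightarrow> Rx C lam cA c L pa pa' t (cA * t)) (at_right 0)"
      proof (rule quot_right[where F="\<lambda>y. Rf C lam cA c L pa t y" and \<delta>="L"])
        show "((\<lambda>y. Rf C lam cA c L pa t y) has_real_derivative Rx C lam cA c L pa pa' t (cA * t)) (at (cA * t))"
          by (rule R_derivs(2)[OF da dda Lne])
        show "0 < L" using L .
        show "u t (cA * t + h) = Rf C lam cA c L pa t (cA * t + h)" if "0 < h" "h < L" for h
          using that gt by (intro u3) auto
        show "u t (cA * t) = Rf C lam cA c L pa t (cA * t)"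
          using gt L by (intro u3) auto
      qed
      have "Rx C lam cA c L pa pa' t (cA * t) = C * exp (- lam * (cA * t - c * t)) * (- cA / 2 + pa' 0 / L)"
        using E pa0 by (simp add: Rx_def algebra_simps)
      moreover have "C * exp (- lam * (cA * t - c * t)) * (- cA / 2 + pa' 0 / L) \<le> C * exp (- lam * (cA * t - c * t)) * - lam"
        using slope C by (intro mult_left_mono) auto
      ultimately show ?thesis using l r 2 by auto
    next
      case 3
      have zz: "(cA * t + L - cA * t) / L = 1" using Lne by simp
      have l: "((\<lambda>h. (u t (cA * t + L + h) - u t (cA * t + L)) / h) \<longlongrightarrow> Rx C lam cA c L pa pa' t (cA * t + L)) (at_left 0)"
      proof (rule quot_left[where F="\<lambda>y. Rf C lam cA c L pa t y" and \<delta>="L"])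
        show "((\<lambda>y. Rf C lam cA c L pa t y) has_real_derivative Rx C lam cA c L pa pa' t (cA * t + L)) (at (cA * t + L))"
          by (rule R_derivs(2)[OF da dda Lne])
        show "0 < L" using L .
        show "u t (cA * t + L + h) = Rf C lam cA c L pa t (cA * t + L + h)" if "- L < h" "h < 0" for h
          using that gt by (intro u3) auto
        show "u t (cA * t + L) = Rf C lam cA c L pa t (cA * t + L)"
          using u4[of t "cA * t + L"] gt L p1 zz by (simp add: Rf_def)
      qed
      have r: "((\<lambda>h. (u t (cA * t + L + h) - u t (cA * t + L)) / h) \<longlongrightarrow> Rx C lam cA c L pb pb' t (cA * t + L)) (at_right 0)"
      proof (rule quot_right[where F="\<lambda>y. Rf C lam cA c L pb t y" and \<delta>="1"])
        show "((\<lambda>y. Rf C lam cA c L pb t y) has_real_derivative Rx C lam cA c L pb pb' t (cA * t + L)) (at (cA * t + L))"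
          by (rule R_derivs(2)[OF db ddb Lne])
        show "u t (cA * t + L + h) = Rf C lam cA c L pb t (cA * t + L + h)" if "0 < h" "h < 1" for h
          using that gt L by (intro u4) auto
        show "u t (cA * t + L) = Rf C lam cA c L pb t (cA * t + L)"
          using gt L by (intro u4) auto
      qed simp
      have "Rx C lam cA c L pa pa' t (cA * t + L) = Rx C lam cA c L pb pb' t (cA * t + L)"
        unfolding Rx_def zz using p1 p1' by simp
      then show ?thesis using l r 3 by auto
    qed
  qed
  show ?thesis unfolding gen_supersolution_def
    using cont gs_deriv gs_ord cls jmp by blast
qed


lemma speed_facts:
  fixes r1 l cA :: real
  assumes r1: "r1 > 0" and l: "- l - r1 \<ge> 0" and cA: "cA > 2 * sqrt (- l)"
    and c_def: "c = (if cA < 2 * sqrt r1 + 2 * sqrt (- l - r1) then Ffun r1 l cA else 2 * sqrt r1)"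
    and lam_def: "lam = lam_c r1 c"
  shows "lam > 0" "c \<le> cA" "c * lam - lam\<^sup>2 - r1 \<ge> 0" "cA\<^sup>2 / 4 + l - lam * (cA - c) \<ge> 0"
    "lam \<le> cA / 2 - sqrt (- l - r1)"
proof -
  define a where "a = 2 * sqrt (- l - r1)"
  define sr where "sr = sqrt r1"
  have a0: "a \<ge> 0" using l by (simp add: a_def)
  have a2: "a\<^sup>2 = 4 * (- l - r1)" using l by (simp add: a_def power_mult_distrib)
  have sr0: "sr > 0" using r1 by (simp add: sr_def)
  have sr2: "sr\<^sup>2 = r1" using r1 by (simp add: sr_def)
  have ml: "- l \<ge> 0" using l r1 by linarith
  have s2l: "(2 * sqrt (- l))\<^sup>2 = - 4 * l" using ml by (simp add: power_mult_distrib)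
  have cApos: "cA > 0" using cA ml by (smt (verit) real_sqrt_ge_zero)
  have "cA\<^sup>2 > (2 * sqrt (- l))\<^sup>2"
    using cA ml by (intro power_strict_mono) auto
  then have cA2: "cA\<^sup>2 > a\<^sup>2 + 4 * r1" using s2l a2 by simp
  have "a \<le> 2 * sqrt (- l)" unfolding a_def using r1 by simp
  then have dpos: "cA - a > 0" using cA by simp
  define d where "d = cA - a"
  have d: "d > 0" using dpos by (simp add: d_def)
  have cAd: "cA = d + a" by (simp add: d_def)
  have lA: "l = - a\<^sup>2 / 4 - r1" using a2 by (simp add: field_simps)
  have big: "d\<^sup>2 + 2 * a * d > 4 * r1" using cA2 unfolding cAd by (simp add: power2_eq_square algebra_simps)
  have hs: "sqrt (- l - r1) = a / 2" by (simp add: a_def)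
  have all: "lam > 0 \<and> c \<le> cA \<and> c * lam - lam\<^sup>2 - r1 \<ge> 0 \<and> cA\<^sup>2 / 4 + l - lam * (cA - c) \<ge> 0 \<and>
      lam \<le> cA / 2 - sqrt (- l - r1)"
    proof (cases "d < 2 * sr")
      case True
      have cc: "c = d / 2 + 2 * r1 / d"
        using True c_def by (simp add: Ffun_def a_def[symmetric] d_def sr_def)
      have "d\<^sup>2 < (2 * sr)\<^sup>2" using True d by (intro power_strict_mono) auto
      then have dd: "d\<^sup>2 < 4 * r1" using sr2 by (simp add: power_mult_distrib)
      have q: "c\<^sup>2 - 4 * r1 = (2 * r1 / d - d / 2)\<^sup>2"
        unfolding cc using d by (simp add: power2_eq_square field_simps)
      have nn: "2 * r1 / d - d / 2 \<ge> 0"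
        using dd d by (simp add: field_simps power2_eq_square)
      have lamv: "lam = d / 2"
        unfolding lam_def lam_c_def q using nn by (simp add: cc)
      have i1: "c \<le> cA"
      proof -
        have "2 * r1 / d \<le> d / 2 + a" using big d by (simp add: field_simps power2_eq_square)
        then show ?thesis unfolding cc cAd by simp
      qed
      have i2: "c * lam - lam\<^sup>2 - r1 = 0"
        unfolding cc lamv using d by (simp add: field_simps power2_eq_square)
      have i3: "cA\<^sup>2 / 4 + l - lam * (cA - c) = 0"
        unfolding cc lamv lA cAd using d by (simp add: field_simps power2_eq_square)
      show ?thesis using i1 i2 i3 lamv d hs cAd by (intro conjI) linarith+
    next
      case False
      have cc: "c = 2 * sr"
        using False c_def by (simp add: a_def[symmetric] d_def sr_def)
      have lamv: "lam = sr"
        unfolding lam_def lam_c_def cc using sr2 by (simp add: power_mult_distrib)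
      have i1: "c \<le> cA" using False a0 cc cAd by simp
      have i2: "c * lam - lam\<^sup>2 - r1 = 0" unfolding cc lamv using sr2 by (simp add: power2_eq_square)
      have i3: "cA\<^sup>2 / 4 + l - lam * (cA - c) = (d / 2 - sr)\<^sup>2 + a * (d / 2 - sr)"
        unfolding cc lamv lA cAd using sr2 by (simp add: field_simps power2_eq_square)
      have "0 \<le> a * (d / 2 - sr)" using False a0 by simp
      then have i3': "cA\<^sup>2 / 4 + l - lam * (cA - c) \<ge> 0" unfolding i3 by simp
      show ?thesis using i1 i2 i3' lamv False hs cAd sr0 by (intro conjI) linarith+
    qed
  then show "lam > 0" "c \<le> cA" "c * lam - lam\<^sup>2 - r1 \<ge> 0" "cA\<^sup>2 / 4 + l - lam * (cA - c) \<ge> 0"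
    "lam \<le> cA / 2 - sqrt (- l - r1)" by auto
qed



lemma cos_arctan_pos: "cos (arctan x) > 0"
  by (simp add: cos_arctan add_pos_nonneg)

lemma sin_arctan_eq: "sin (arctan x) = x * cos (arctan x)"
  by (simp add: cos_arctan sin_arctan)

lemma arccot_arctan: "arccot y = pi / 2 - arctan y"
  by (simp add: arccot_def)

lemma Lbar_form:
  fixes a b r2 :: real
  assumes "a < b" "b < r2"
  shows "1 / sqrt (r2 - b) * arccot (sqrt ((r2 - b) / (b - a))) = arctan (sqrt ((b - a) / (r2 - b))) / sqrt (r2 - b)"
proof -
  have w: "sqrt ((b - a) / (r2 - b)) > 0" using assms by simp
  have inv: "sqrt ((r2 - b) / (b - a)) = 1 / sqrt ((b - a) / (r2 - b))"
    by (simp add: real_sqrt_divide)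
  have "arctan (1 / sqrt ((b - a) / (r2 - b))) = sgn (sqrt ((b - a) / (r2 - b))) * pi / 2 - arctan (sqrt ((b - a) / (r2 - b)))"
    by (rule Transcendental.arctan_inverse) (use w assms in simp)
  moreover have "sgn (sqrt ((b - a) / (r2 - b))) = 1" using w by simp
  ultimately have "arctan (1 / sqrt ((b - a) / (r2 - b))) = pi / 2 - arctan (sqrt ((b - a) / (r2 - b)))" by simp
  then show ?thesis unfolding arccot_def inv by simp
qed

lemma cot_inj:
  fixes x y :: real
  assumes "0 < x" "x < pi" "0 < y" "y < pi" "cot x = cot y"
  shows "x = y"
proof -
  have sx: "sin x > 0" and sy: "sin y > 0" using assms by (auto intro: sin_gt_zero)
  have "cos x / sin x = cos y / sin y" using assms(5) by (simp add: cot_def)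
  then have e: "cos x * sin y = cos y * sin x" using sx sy by (simp add: frac_eq_eq)
  have "sin (y - x) = sin y * cos x - cos y * sin x" by (rule sin_diff)
  also have "\<dots> = 0" using e by (simp add: mult.commute)
  finally have "sin (y - x) = 0" .
  then have "y - x = 0" using assms sin_eq_0_pi[of "y - x"] by auto
  then show ?thesis by simp
qed

lemma cot_arctan_sum:
  fixes p q s :: real
  assumes "s > 0" "p \<ge> 0" "q \<ge> 0" "p + q > 0"
  shows "cot (arctan (p / s) + arctan (q / s)) = (s\<^sup>2 - p * q) / (s * (p + q))"
proof -
  define ca where "ca = cos (arctan (p / s))"
  define cb where "cb = cos (arctan (q / s))"
  have ca: "ca > 0" and cb: "cb > 0" by (simp_all add: ca_def cb_def cos_arctan_pos)
  have sa: "sin (arctan (p / s)) = p / s * ca" by (simp add: ca_def sin_arctan_eq)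
  have sb: "sin (arctan (q / s)) = q / s * cb" by (simp add: cb_def sin_arctan_eq)
  have "cot (arctan (p / s) + arctan (q / s)) = (ca * cb - p / s * ca * (q / s * cb)) / (p / s * ca * cb + ca * (q / s * cb))"
    by (simp add: cot_def cos_add sin_add sa sb ca_def[symmetric] cb_def[symmetric])
  also have "\<dots> = (ca * cb / s\<^sup>2 * (s\<^sup>2 - p * q)) / (ca * cb / s\<^sup>2 * (s * (p + q)))"
  proof -
    have "ca * cb - p / s * ca * (q / s * cb) = ca * cb / s\<^sup>2 * (s\<^sup>2 - p * q)"
      using assms by (simp add: field_simps power2_eq_square)
    moreover have "p / s * ca * cb + ca * (q / s * cb) = ca * cb / s\<^sup>2 * (s * (p + q))"
      using assms by (simp add: field_simps power2_eq_square)
    ultimately show ?thesis by simp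
  qed
  also have "\<dots> = (s\<^sup>2 - p * q) / (s * (p + q))"
    using ca cb assms by (intro mult_divide_mult_cancel_left) simp
  finally show ?thesis .
qed



lemma lambda1_case1:
  fixes r1 r2 r3 L :: real
  assumes pos: "r1 > 0" "r3 > 0" "L > 0" and r2: "r2 > max r1 r3" and LL: "L > Lbar r1 r2 r3"
  shows "- r2 < lambda1 r1 r2 r3 L \<and> lambda1 r1 r2 r3 L < - max r1 r3 \<and>
    L * sqrt (r2 + lambda1 r1 r2 r3 L) =
      arctan (sqrt (- r1 - lambda1 r1 r2 r3 L) / sqrt (r2 + lambda1 r1 r2 r3 L))
    + arctan (sqrt (- r3 - lambda1 r1 r2 r3 L) / sqrt (r2 + lambda1 r1 r2 r3 L))"
proof -
  define m where "m = max r1 r3"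
  have m1: "r1 \<le> m" and m3: "r3 \<le> m" and mr2: "m < r2" using r2 by (auto simp: m_def)
  define H where "H = (\<lambda>x. L * sqrt (r2 + x) - arctan (sqrt (- r1 - x) / sqrt (r2 + x)) - arctan (sqrt (- r3 - x) / sqrt (r2 + x)))"
  define P where "P = (\<lambda>l. - r2 < l \<and> l < min (- max r1 r3) (pi\<^sup>2 / L\<^sup>2 - r2) \<and>
              cot (L * sqrt (r2 + l)) =
                (r2 + l - sqrt ((r1 + l) * (r3 + l))) /
                (sqrt (r2 + l) * (sqrt (- r1 - l) + sqrt (- r3 - l))))"
  have l_eq: "lambda1 r1 r2 r3 L = (THE l. P l)" using LL by (simp add: lambda1_def P_def)
  have equiv: "cot (L * sqrt (r2 + x)) = (r2 + x - sqrt ((r1 + x) * (r3 + x))) / (sqrt (r2 + x) * (sqrt (- r1 - x) + sqrt (- r3 - x)))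
      \<longleftrightarrow> H x = 0"
    if x: "- r2 < x" "x < - m" "L * sqrt (r2 + x) < pi" for x
  proof -
    define s where "s = sqrt (r2 + x)"
    define p where "p = sqrt (- r1 - x)"
    define q where "q = sqrt (- r3 - x)"
    have s: "s > 0" using x by (simp add: s_def)
    have p: "p > 0" using x m1 by (simp add: p_def)
    have q: "q > 0" using x m3 by (simp add: q_def)
    have s2: "s\<^sup>2 = r2 + x" using x by (simp add: s_def)
    have pq: "sqrt ((r1 + x) * (r3 + x)) = p * q"
    proof -
      have "(r1 + x) * (r3 + x) = (- r1 - x) * (- r3 - x)" by (simp add: algebra_simps)
      then show ?thesis by (simp add: p_def q_def real_sqrt_mult)
    qed
    have rhs: "(r2 + x - sqrt ((r1 + x) * (r3 + x))) / (sqrt (r2 + x) * (sqrt (- r1 - x) + sqrt (- r3 - x)))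
        = cot (arctan (p / s) + arctan (q / s))"
      using cot_arctan_sum[of s p q] s p q s2 pq by (simp add: s_def[symmetric] p_def[symmetric] q_def[symmetric])
    have a1: "0 < arctan (p / s)" "arctan (p / s) < pi / 2" using p s arctan_ubound by auto
    have a2: "0 < arctan (q / s)" "arctan (q / s) < pi / 2" using q s arctan_ubound by auto
    have Ls: "0 < L * s" "L * s < pi" using s pos x by (auto simp: s_def)
    have "cot (L * s) = cot (arctan (p / s) + arctan (q / s)) \<longleftrightarrow> L * s = arctan (p / s) + arctan (q / s)"
    proof
      assume "cot (L * s) = cot (arctan (p / s) + arctan (q / s))"
      then show "L * s = arctan (p / s) + arctan (q / s)"
        by (rule cot_inj[rotated 4]) (use Ls a1 a2 in linarith)+
    qed simp
    moreover have "H x = 0 \<longleftrightarrow> L * s = arctan (p / s) + arctan (q / s)"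
      by (auto simp: H_def s_def p_def q_def)
    ultimately show ?thesis unfolding rhs by (simp add: s_def)
  qed
  have mono: "H x < H y" if xy: "- r2 < x" "x < y" "y \<le> - m" for x y
  proof -
    have sx: "sqrt (r2 + x) > 0" using xy by simp
    have sxy: "sqrt (r2 + x) < sqrt (r2 + y)" using xy by simp
    have p: "sqrt (- r1 - y) / sqrt (r2 + y) \<le> sqrt (- r1 - x) / sqrt (r2 + x)"
      by (rule frac_le) (use xy sx sxy m1 m3 in auto)
    have q: "sqrt (- r3 - y) / sqrt (r2 + y) \<le> sqrt (- r3 - x) / sqrt (r2 + x)"
      by (rule frac_le) (use xy sx sxy m1 m3 in auto)
    have "L * sqrt (r2 + x) < L * sqrt (r2 + y)" using sxy pos by simp
    moreover have "arctan (sqrt (- r1 - y) / sqrt (r2 + y)) \<le> arctan (sqrt (- r1 - x) / sqrt (r2 + x))"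
      using p by (rule arctan_monotone')
    moreover have "arctan (sqrt (- r3 - y) / sqrt (r2 + y)) \<le> arctan (sqrt (- r3 - x) / sqrt (r2 + x))"
      using q by (rule arctan_monotone')
    ultimately show ?thesis by (simp add: H_def)
  qed
  define lh where "lh = min (- m) (pi\<^sup>2 / L\<^sup>2 - r2)"
  have sqpi: "sqrt (pi\<^sup>2 / L\<^sup>2) = pi / L" using pos by (simp add: real_sqrt_divide)
  have Hhi: "H lh > 0"
  proof (cases "pi\<^sup>2 / L\<^sup>2 - r2 \<le> - m")
    case True
    then have lh: "lh = pi\<^sup>2 / L\<^sup>2 - r2" by (simp add: lh_def)
    have "L * sqrt (r2 + lh) = pi" using pos by (simp add: lh sqpi)
    then show ?thesis using arctan_ubound[of "sqrt (- r1 - lh) / sqrt (r2 + lh)"] arctan_ubound[of "sqrt (- r3 - lh) / sqrt (r2 + lh)"]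
      by (simp add: H_def)
  next
    case False
    then have lh: "lh = - m" by (simp add: lh_def)
    show ?thesis
    proof (cases "r3 \<le> r1")
      case True
      then have mm: "m = r1" by (simp add: m_def)
      have s: "sqrt (r2 - r1) > 0" using mr2 mm by simp
      have H: "H lh = L * sqrt (r2 - r1) - arctan (sqrt (r1 - r3) / sqrt (r2 - r1))"
        by (simp add: H_def lh mm)
      show ?thesis
      proof (cases "r1 = r3")
        case True
        then show ?thesis using H s pos by simp
      next
        case False
        then have lt: "r3 < r1" using \<open>r3 \<le> r1\<close> by simp
        have "Lbar r1 r2 r3 = 1 / sqrt (r2 - r1) * arccot (sqrt ((r2 - r1) / (r1 - r3)))"
          using lt by (simp add: Lbar_def max_def)
        also have "\<dots> = arctan (sqrt ((r1 - r3) / (r2 - r1))) / sqrt (r2 - r1)"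
          by (rule Lbar_form) (use lt mr2 mm in auto)
        finally have "arctan (sqrt (r1 - r3) / sqrt (r2 - r1)) / sqrt (r2 - r1) < L"
          using LL by (simp add: real_sqrt_divide)
        then have "arctan (sqrt (r1 - r3) / sqrt (r2 - r1)) < L * sqrt (r2 - r1)"
          using s by (simp add: pos_divide_less_eq mult.commute)
        then show ?thesis using H by simp
      qed
    next
      case False
      then have lt: "r1 < r3" by simp
      then have mm: "m = r3" by (simp add: m_def)
      have s: "sqrt (r2 - r3) > 0" using mr2 mm by simp
      have H: "H lh = L * sqrt (r2 - r3) - arctan (sqrt (r3 - r1) / sqrt (r2 - r3))"
        by (simp add: H_def lh mm)
      have "Lbar r1 r2 r3 = 1 / sqrt (r2 - r3) * arccot (sqrt ((r2 - r3) / (r3 - r1)))"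
        using lt by (simp add: Lbar_def max_def)
      also have "\<dots> = arctan (sqrt ((r3 - r1) / (r2 - r3))) / sqrt (r2 - r3)"
        by (rule Lbar_form) (use lt mr2 mm in auto)
      finally have "arctan (sqrt (r3 - r1) / sqrt (r2 - r3)) / sqrt (r2 - r3) < L"
        using LL by (simp add: real_sqrt_divide)
      then have "arctan (sqrt (r3 - r1) / sqrt (r2 - r3)) < L * sqrt (r2 - r3)"
        using s by (simp add: pos_divide_less_eq mult.commute)
      then show ?thesis using H by simp
    qed
  qed
  define ep where "ep = min ((r2 - m) / 2) (pi\<^sup>2 / (8 * L\<^sup>2))"
  have ep: "ep > 0" using mr2 pos by (simp add: ep_def)
  define ll where "ll = - r2 + ep"
  have ll_gt: "- r2 < ll" using ep by (simp add: ll_def)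
  have ll_le: "ll \<le> lh"
  proof -
    have "ep \<le> (r2 - m) / 2" unfolding ep_def by (rule min.cobounded1)
    then have "ep \<le> r2 - m" using mr2 by (simp add: field_simps)
    moreover have "pi\<^sup>2 / (8 * L\<^sup>2) \<le> pi\<^sup>2 / L\<^sup>2" using pos by (simp add: frac_le)
    then have "ep \<le> pi\<^sup>2 / L\<^sup>2" unfolding ep_def using min.cobounded2 order.trans by blast
    ultimately show ?thesis by (simp add: ll_def lh_def)
  qed
  have Hlo: "H ll < 0"
  proof -
    have s2: "r2 + ll = ep" by (simp add: ll_def)
    have sp: "sqrt ep > 0" using ep by simp
    have epm: "ep \<le> (r2 - m) / 2" unfolding ep_def by (rule min.cobounded1)
    have "ep \<le> - r1 - ll" using epm m1 by (simp add: ll_def)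
    then have "sqrt ep \<le> sqrt (- r1 - ll)" by simp
    then have "1 \<le> sqrt (- r1 - ll) / sqrt ep" using sp by simp
    then have A1: "pi / 4 \<le> arctan (sqrt (- r1 - ll) / sqrt ep)"
      using arctan_monotone'[of 1] by (simp add: arctan_one)
    have "ep \<le> - r3 - ll" using epm m3 by (simp add: ll_def)
    then have "sqrt ep \<le> sqrt (- r3 - ll)" by simp
    then have "1 \<le> sqrt (- r3 - ll) / sqrt ep" using sp by simp
    then have A3: "pi / 4 \<le> arctan (sqrt (- r3 - ll) / sqrt ep)"
      using arctan_monotone'[of 1] by (simp add: arctan_one)
    have "(L * sqrt ep)\<^sup>2 = L\<^sup>2 * ep" using ep by (simp add: power_mult_distrib)
    also have "\<dots> \<le> L\<^sup>2 * (pi\<^sup>2 / (8 * L\<^sup>2))" using pos by (intro mult_left_mono) (auto simp: ep_def)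
    also have "\<dots> = pi\<^sup>2 / 8" using pos by simp
    also have "\<dots> < (pi / 2)\<^sup>2" by (simp add: power_divide)
    finally have "L * sqrt ep < pi / 2"
      by (rule power2_less_imp_less) simp
    then show ?thesis using A1 A3 by (simp add: H_def s2)
  qed
  have cH: "continuous_on {ll..lh} H"
  proof -
    have "sqrt (r2 + x) \<noteq> 0" if "x \<in> {ll..lh}" for x using that ll_gt by simp
    then show ?thesis unfolding H_def by (auto intro!: continuous_intros)
  qed
  obtain l0 where l0: "ll \<le> l0" "l0 \<le> lh" "H l0 = 0"
    using IVT'[of H ll 0 lh, OF _ _ ll_le cH] Hlo Hhi by auto
  have l0lt: "l0 < lh" using l0 Hhi by (cases "l0 = lh") auto
  have lhm: "lh \<le> - m" by (simp add: lh_def)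
  have piL: "L * sqrt (r2 + x) < pi" if "x < pi\<^sup>2 / L\<^sup>2 - r2" "- r2 < x" for x
  proof -
    have "sqrt (r2 + x) < sqrt (pi\<^sup>2 / L\<^sup>2)" using that by simp
    then have "sqrt (r2 + x) < pi / L" using sqpi by simp
    then show ?thesis using pos by (simp add: pos_less_divide_eq mult.commute)
  qed
  have b0: "- r2 < l0" "l0 < - m" "L * sqrt (r2 + l0) < pi"
    using l0 ll_gt l0lt lhm piL[of l0] by (auto simp: lh_def)
  have Pl0: "P l0"
    using equiv[OF b0] l0 b0 l0lt by (simp add: P_def lh_def m_def)
  have uniq: "y = l0" if "P y" for y
  proof -
    have bnd: "- r2 < y" "y < - m" "L * sqrt (r2 + y) < pi"
      using that piL[of y] by (auto simp: P_def m_def)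
    have Hy: "H y = 0" using equiv[OF bnd] that by (simp add: P_def)
    show ?thesis
    proof (rule ccontr)
      assume "y \<noteq> l0"
      then have "y < l0 \<or> l0 < y" by auto
      then show False
      proof
        assume "y < l0" then have "H y < H l0" using mono bnd b0 by simp
        then show False using Hy l0 by simp
      next
        assume "l0 < y" then have "H l0 < H y" using mono bnd b0 by simp
        then show False using Hy l0 by simp
      qed
    qed
  qed
  have "lambda1 r1 r2 r3 L = l0" unfolding l_eq by (rule the_equality[where P=P, OF Pl0 uniq])
  then show ?thesis using b0 l0(3) by (simp add: H_def m_def)
qed



definition phi_good :: "real \<Rightarrow> real \<Rightarrow> real \<Rightarrow> real \<Rightarrow> real \<Rightarrow> (real \<Rightarrow> real) \<Rightarrow> bool" where
 "phi_good r1 r2 r3 L l Phi \<longleftrightarrow> (\<exists>pa pa' pb pb'.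
   (\<forall>y. (pa has_real_derivative pa' y) (at y)) \<and>
   (\<forall>y. (pa' has_real_derivative (- (L\<^sup>2) * (r2 + l)) * pa y) (at y)) \<and>
   (\<forall>y. (pb has_real_derivative pb' y) (at y)) \<and>
   (\<forall>y. (pb' has_real_derivative (- (L\<^sup>2) * (r3 + l)) * pb y) (at y)) \<and>
   pa 0 = 1 \<and> pa 1 = pb 1 \<and> pa' 1 = pb' 1 \<and>
   (\<forall>y. 0 \<le> y \<and> y \<le> 1 \<longrightarrow> pa y > 0) \<and> (\<forall>y. 1 \<le> y \<longrightarrow> pb y > 0) \<and>
   (\<forall>y. 0 \<le> y \<longrightarrow> Phi y = (if y < 1 then pa y else pb y)) \<and>
   pa' 0 / L \<le> sqrt (- l - r1))"

lemma c23_trig: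
  fixes a b r2 L :: real
  assumes ab: "a < b" "b < r2" and L: "L > 0"
    and LL: "L \<le> 1 / sqrt (r2 - b) * arccot (sqrt ((r2 - b) / (b - a)))"
  defines "k \<equiv> sqrt (r2 - b)" and "C3 \<equiv> arccot (sqrt ((b - a) / (r2 - b)))"
  shows "k > 0" "0 < C3" "C3 < pi / 2" "sin C3 > 0" "L * k + C3 \<le> pi / 2"
    "k * (cos C3 / sin C3) = sqrt (b - a)" "k\<^sup>2 = r2 - b"
proof -
  define w where "w = sqrt ((b - a) / (r2 - b))"
  have w: "w > 0" using ab by (simp add: w_def)
  have C3: "C3 = pi / 2 - arctan w" by (simp add: C3_def w_def arccot_def)
  show k: "k > 0" using ab by (simp add: k_def)
  have at: "0 < arctan w" "arctan w < pi / 2" using w arctan_ubound by auto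
  show "0 < C3" "C3 < pi / 2" using at C3 by auto
  have sC: "sin C3 = cos (arctan w)" and cC: "cos C3 = sin (arctan w)"
    by (simp_all add: C3 sin_diff cos_diff)
  show sC0: "sin C3 > 0" using sC cos_arctan_pos by simp
  have "L \<le> arctan w / k" using LL unfolding Lbar_form[OF ab] by (simp add: k_def w_def)
  then have "L * k \<le> arctan w" using k by (simp add: pos_le_divide_eq)
  then show "L * k + C3 \<le> pi / 2" using C3 by simp
  have "cos C3 / sin C3 = w" using cC sC sin_arctan_eq[of w] cos_arctan_pos[of w] by simp
  moreover have "k * w = sqrt (b - a)"
  proof -
    have "k * w = sqrt ((r2 - b) * ((b - a) / (r2 - b)))" by (simp only: k_def w_def real_sqrt_mult)
    also have "(r2 - b) * ((b - a) / (r2 - b)) = b - a" using ab by simp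
    finally show ?thesis .
  qed
  ultimately show "k * (cos C3 / sin C3) = sqrt (b - a)" by simp
  show "k\<^sup>2 = r2 - b" using ab by (simp add: k_def)
qed



lemma case2_good:
  fixes r1 r2 r3 L :: real
  assumes pos: "r1 > 0" "r3 > 0" "L > 0" and r2: "r2 > max r1 r3" and lt: "r1 < r3"
    and LL: "\<not> L > Lbar r1 r2 r3"
  shows "lambda1 r1 r2 r3 L = - r3" "phi_good r1 r2 r3 L (- r3) (phi1 r1 r2 r3 L)"
proof -
  show "lambda1 r1 r2 r3 L = - r3" using LL lt by (simp add: lambda1_def max_def)
  have r32: "r3 < r2" using r2 by simp
  have LL': "L \<le> 1 / sqrt (r2 - r3) * arccot (sqrt ((r2 - r3) / (r3 - r1)))"
    using LL lt by (simp add: Lbar_def max_def)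
  define k where "k = sqrt (r2 - r3)"
  define C3 where "C3 = arccot (sqrt ((r3 - r1) / (r2 - r3)))"
  note T = c23_trig[OF lt r32 pos(3) LL', folded k_def C3_def]
  have sC: "sin C3 \<noteq> 0" using T(4) by simp
  define pa where "pa = (\<lambda>y. sin (L * k * y + C3) / sin C3)"
  define pa' where "pa' = (\<lambda>y. cos (L * k * y + C3) * (L * k) / sin C3)"
  define pb where "pb = (\<lambda>y. sin (L * k + C3) / sin C3 + k * cos (L * k + C3) / sin C3 * L * (y - 1))"
  define pb' where "pb' = (\<lambda>y::real. k * cos (L * k + C3) / sin C3 * L)"
  have h1: "\<forall>y. (pa has_real_derivative pa' y) (at y)"
    unfolding pa_def pa'_def by (auto intro!: derivative_eq_intros simp: sC)
  have h2: "\<forall>y. (pa' has_real_derivative (- (L\<^sup>2) * (r2 + - r3)) * pa y) (at y)"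
  proof
    fix y
    have "(pa' has_real_derivative - sin (L * k * y + C3) * (L * k) * (L * k) / sin C3) (at y)"
      unfolding pa'_def by (auto intro!: derivative_eq_intros simp: sC)
    moreover have "- sin (L * k * y + C3) * (L * k) * (L * k) / sin C3 = (- (L\<^sup>2) * (r2 + - r3)) * pa y"
    proof -
      have kk: "r2 = k * k + r3" using T(7) by (simp add: power2_eq_square)
      show ?thesis by (simp add: pa_def kk power2_eq_square algebra_simps)
    qed
    ultimately show "(pa' has_real_derivative (- (L\<^sup>2) * (r2 + - r3)) * pa y) (at y)" by simp
  qed
  have h3: "\<forall>y. (pb has_real_derivative pb' y) (at y)"
    unfolding pb_def pb'_def by (auto intro!: derivative_eq_intros simp: sC)
  have h4: "\<forall>y. (pb' has_real_derivative (- (L\<^sup>2) * (r3 + - r3)) * pb y) (at y)"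
    unfolding pb'_def by (auto intro!: derivative_eq_intros simp: sC)
  have h5: "pa 0 = 1" using sC by (simp add: pa_def)
  have h6: "pa 1 = pb 1" by (simp add: pa_def pb_def)
  have h7: "pa' 1 = pb' 1" by (simp add: pa'_def pb'_def)
  have arg: "0 < L * k * y + C3 \<and> L * k * y + C3 \<le> pi / 2" if "0 \<le> y" "y \<le> 1" for y
  proof -
    have "0 \<le> L * k * y" using that pos T(1) by simp
    moreover have "L * k * y \<le> L * k" using that pos T(1) by (simp add: mult_left_le)
    ultimately show ?thesis using T(2,5) by linarith
  qed
  have h8: "\<forall>y. 0 \<le> y \<and> y \<le> 1 \<longrightarrow> pa y > 0"
  proof (intro allI impI)
    fix y :: real assume y: "0 \<le> y \<and> y \<le> 1"
    have "sin (L * k * y + C3) > 0" using arg[of y] y by (intro sin_gt_zero) auto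
    then show "pa y > 0" using T(4) by (simp add: pa_def)
  qed
  have h9: "\<forall>y. 1 \<le> y \<longrightarrow> pb y > 0"
  proof (intro allI impI)
    fix y :: real assume y: "1 \<le> y"
    have s: "sin (L * k + C3) > 0" using arg[of 1] by (intro sin_gt_zero) auto
    have c: "cos (L * k + C3) \<ge> 0" using arg[of 1] by (intro cos_ge_zero) auto
    have "0 \<le> k * cos (L * k + C3) / sin C3 * L * (y - 1)"
      using c T(1,4) pos y by simp
    moreover have "sin (L * k + C3) / sin C3 > 0" using s T(4) by simp
    ultimately show "pb y > 0" by (simp add: pb_def)
  qed
  have h10: "\<forall>y. 0 \<le> y \<longrightarrow> phi1 r1 r2 r3 L y = (if y < 1 then pa y else pb y)"
  proof (intro allI impI)
    fix y :: real assume y: "0 \<le> y"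
    show "phi1 r1 r2 r3 L y = (if y < 1 then pa y else pb y)"
      using LL lt y h5 by (auto simp: phi1_def phi_case2_def Let_def k_def[symmetric] C3_def[symmetric] pa_def pb_def)
  qed
  have h11: "pa' 0 / L \<le> sqrt (- (- r3) - r1)"
  proof -
    have "pa' 0 / L = k * (cos C3 / sin C3)" using pos by (simp add: pa'_def)
    then show ?thesis using T(6) by simp
  qed
  show "phi_good r1 r2 r3 L (- r3) (phi1 r1 r2 r3 L)"
    unfolding phi_good_def
    by (rule exI[of _ pa], rule exI[of _ pa'], rule exI[of _ pb], rule exI[of _ pb'])
       (intro conjI h1 h2 h3 h4 h5 h6 h7 h8 h9 h10 h11)
qed



lemma case3_good:
  fixes r1 r2 r3 L :: real
  assumes pos: "r1 > 0" "r3 > 0" "L > 0" and r2: "r2 > max r1 r3" and lt: "r3 < r1"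
    and LL: "\<not> L > Lbar r1 r2 r3"
  shows "lambda1 r1 r2 r3 L = - r1" "phi_good r1 r2 r3 L (- r1) (phi1 r1 r2 r3 L)"
proof -
  show "lambda1 r1 r2 r3 L = - r1" using LL lt by (simp add: lambda1_def max_def)
  have r12: "r1 < r2" using r2 by simp
  have LL': "L \<le> 1 / sqrt (r2 - r1) * arccot (sqrt ((r2 - r1) / (r1 - r3)))"
    using LL lt by (simp add: Lbar_def max_def)
  define k where "k = sqrt (r2 - r1)"
  define C3 where "C3 = arccot (sqrt ((r1 - r3) / (r2 - r1)))"
  note T = c23_trig[OF lt r12 pos(3) LL', folded k_def C3_def]
  have sC: "sin C3 \<noteq> 0" using T(4) by simp
  have arg: "0 < L * k * y + C3 \<and> L * k * y + C3 \<le> pi / 2" if "0 \<le> y" "y \<le> 1" for y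
  proof -
    have "0 \<le> L * k * y" using that pos T(1) by simp
    moreover have "L * k * y \<le> L * k" using that pos T(1) by (simp add: mult_left_le)
    ultimately show ?thesis using T(2,5) by linarith
  qed
  define P where "P = sin (L * k + C3) / sin C3"
  have sP: "sin (L * k + C3) > 0" using arg[of 1] by (intro sin_gt_zero) auto
  have cP: "cos (L * k + C3) \<ge> 0" using arg[of 1] by (intro cos_ge_zero) auto
  have P: "P > 0" using sP T(4) by (simp add: P_def)
  have Pn: "P \<noteq> 0" using P by simp
  define sq where "sq = sqrt (r1 - r3)"
  have sq2: "sq * sq = r1 - r3" using lt by (simp add: sq_def)
  define pa where "pa = (\<lambda>y. sin (L * k * (1 - y) + C3) / sin C3 / P)"
  define pa' where "pa' = (\<lambda>y. cos (L * k * (1 - y) + C3) * (- (L * k)) / sin C3 / P)"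
  define pb where "pb = (\<lambda>y. exp (L * sq * (1 - y)) / P)"
  define pb' where "pb' = (\<lambda>y. exp (L * sq * (1 - y)) * (- (L * sq)) / P)"
  have kk: "r2 = k * k + r1" using T(7) by (simp add: power2_eq_square)
  have h1: "\<forall>y. (pa has_real_derivative pa' y) (at y)"
    unfolding pa_def pa'_def by (auto intro!: derivative_eq_intros simp: sC Pn)
  have h2: "\<forall>y. (pa' has_real_derivative (- (L\<^sup>2) * (r2 + - r1)) * pa y) (at y)"
  proof
    fix y
    have "(pa' has_real_derivative - sin (L * k * (1 - y) + C3) * (- (L * k)) * (- (L * k)) / sin C3 / P) (at y)"
      unfolding pa'_def by (auto intro!: derivative_eq_intros simp: sC Pn)
    moreover have "- sin (L * k * (1 - y) + C3) * (- (L * k)) * (- (L * k)) / sin C3 / P = (- (L\<^sup>2) * (r2 + - r1)) * pa y"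
      by (simp add: pa_def kk power2_eq_square algebra_simps)
    ultimately show "(pa' has_real_derivative (- (L\<^sup>2) * (r2 + - r1)) * pa y) (at y)" by simp
  qed
  have h3: "\<forall>y. (pb has_real_derivative pb' y) (at y)"
    unfolding pb_def pb'_def by (auto intro!: derivative_eq_intros simp: Pn)
  have h4: "\<forall>y. (pb' has_real_derivative (- (L\<^sup>2) * (r3 + - r1)) * pb y) (at y)"
  proof
    fix y
    have "(pb' has_real_derivative exp (L * sq * (1 - y)) * (- (L * sq)) * (- (L * sq)) / P) (at y)"
      unfolding pb'_def by (auto intro!: derivative_eq_intros simp: Pn)
    moreover have "exp (L * sq * (1 - y)) * (- (L * sq)) * (- (L * sq)) / P = (- (L\<^sup>2) * (r3 + - r1)) * pb y"
    proof -
      have "exp (L * sq * (1 - y)) * (- (L * sq)) * (- (L * sq)) / P = L * L * (sq * sq) * pb y"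
        by (simp add: pb_def algebra_simps)
      then show ?thesis using sq2 by (simp add: power2_eq_square algebra_simps)
    qed
    ultimately show "(pb' has_real_derivative (- (L\<^sup>2) * (r3 + - r1)) * pb y) (at y)" by simp
  qed
  have h5: "pa 0 = 1" using Pn by (simp add: pa_def P_def)
  have h6: "pa 1 = pb 1" using sC by (simp add: pa_def pb_def)
  have h7: "pa' 1 = pb' 1"
  proof -
    have "pa' 1 = - (L * (k * (cos C3 / sin C3))) / P" by (simp add: pa'_def)
    also have "\<dots> = pb' 1" using T(6) by (simp add: pb'_def sq_def)
    finally show ?thesis .
  qed
  have h8: "\<forall>y. 0 \<le> y \<and> y \<le> 1 \<longrightarrow> pa y > 0"
  proof (intro allI impI)
    fix y :: real assume y: "0 \<le> y \<and> y \<le> 1"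
    have "sin (L * k * (1 - y) + C3) > 0" using arg[of "1 - y"] y by (intro sin_gt_zero) auto
    then show "pa y > 0" using T(4) P by (simp add: pa_def)
  qed
  have h9: "\<forall>y. 1 \<le> y \<longrightarrow> pb y > 0" using P by (simp add: pb_def)
  have psi1: "phi_case2 r3 r2 r1 L 1 = P"
    by (simp add: phi_case2_def Let_def k_def[symmetric] C3_def[symmetric] P_def)
  have h10: "\<forall>y. 0 \<le> y \<longrightarrow> phi1 r1 r2 r3 L y = (if y < 1 then pa y else pb y)"
  proof (intro allI impI)
    fix y :: real assume y: "0 \<le> y"
    have ph: "phi1 r1 r2 r3 L y = phi_case2 r3 r2 r1 L (1 - y) / P"
      using LL lt psi1 by (simp add: phi1_def)
    consider "y = 0" | "0 < y \<and> y < 1" | "1 \<le> y" using y by linarith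
    then show "phi1 r1 r2 r3 L y = (if y < 1 then pa y else pb y)"
    proof cases
      case 1 then show ?thesis using ph psi1 Pn h5 by simp
    next
      case 2 then show ?thesis unfolding ph
        by (simp add: phi_case2_def Let_def k_def[symmetric] C3_def[symmetric] pa_def)
    next
      case 3 then show ?thesis unfolding ph
        by (simp add: phi_case2_def Let_def pb_def sq_def)
    qed
  qed
  have h11: "pa' 0 / L \<le> sqrt (- (- r1) - r1)"
  proof -
    have "0 \<le> cos (L * k + C3) * (L * k) / sin C3 / P" using cP pos T(1,4) P by simp
    then have "pa' 0 \<le> 0" by (simp add: pa'_def)
    then show ?thesis using pos by (simp add: divide_nonpos_pos)
  qed
  show "phi_good r1 r2 r3 L (- r1) (phi1 r1 r2 r3 L)"
    unfolding phi_good_def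
    by (rule exI[of _ pa], rule exI[of _ pa'], rule exI[of _ pb], rule exI[of _ pb'])
       (intro conjI h1 h2 h3 h4 h5 h6 h7 h8 h9 h10 h11)
qed



lemma case1_good:
  fixes r1 r2 r3 L :: real
  assumes pos: "r1 > 0" "r3 > 0" "L > 0" and r2: "r2 > max r1 r3" and LL: "L > Lbar r1 r2 r3"
  shows "- lambda1 r1 r2 r3 L - r1 \<ge> 0" "phi_good r1 r2 r3 L (lambda1 r1 r2 r3 L) (phi1 r1 r2 r3 L)"
proof -
  define l where "l = lambda1 r1 r2 r3 L"
  have lam: "- r2 < l" "l < - max r1 r3"
    "L * sqrt (r2 + l) = arctan (sqrt (- r1 - l) / sqrt (r2 + l)) + arctan (sqrt (- r3 - l) / sqrt (r2 + l))"
    using lambda1_case1[OF pos r2 LL] by (simp_all add: l_def)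
  show "- lambda1 r1 r2 r3 L - r1 \<ge> 0" using lam(2) by (simp add: l_def)
  define s where "s = sqrt (r2 + l)"
  define p where "p = sqrt (- r1 - l)"
  define q where "q = sqrt (- r3 - l)"
  have s: "s > 0" using lam by (simp add: s_def)
  have p: "p > 0" using lam by (simp add: p_def)
  have q: "q > 0" using lam by (simp add: q_def)
  have s2: "s * s = r2 + l" using lam by (simp add: s_def)
  have q2: "q * q = - r3 - l" using lam by (simp add: q_def)
  define al where "al = arctan (p / s)"
  define be where "be = arctan (q / s)"
  have Ls: "L * s = al + be" using lam(3) by (simp add: al_def be_def s_def p_def q_def)
  have al: "0 < al" "al < pi / 2" using p s arctan_ubound by (auto simp: al_def)
  have be: "0 < be" "be < pi / 2" using q s arctan_ubound by (auto simp: be_def)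
  define C3 where "C3 = arccot (sqrt ((- r1 - l) / (r2 + l)))"
  have C3: "C3 = pi / 2 - al" by (simp add: C3_def al_def arccot_def p_def s_def real_sqrt_divide)
  have sC: "sin C3 = cos al" and cC: "cos C3 = sin al" by (simp_all add: C3 sin_diff cos_diff)
  have cal: "cos al > 0" by (simp add: al_def cos_arctan_pos)
  have cbe: "cos be > 0" by (simp add: be_def cos_arctan_pos)
  have sal: "sin al = p / s * cos al" by (simp add: al_def sin_arctan_eq)
  have sbe: "sin be = q / s * cos be" by (simp add: be_def sin_arctan_eq)
  have sC0: "sin C3 \<noteq> 0" using sC cal by simp
  have LC: "L * s + C3 = pi / 2 + be" using Ls C3 by simp
  have sLC: "sin (L * s + C3) = cos be" and cLC: "cos (L * s + C3) = - sin be"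
    by (simp_all add: LC sin_add cos_add)
  define pa where "pa = (\<lambda>y. sin (L * s * y + C3) / sin C3)"
  define pa' where "pa' = (\<lambda>y. cos (L * s * y + C3) * (L * s) / sin C3)"
  define pb where "pb = (\<lambda>y. sin (L * s + C3) / sin C3 * exp (- L * q * (y - 1)))"
  define pb' where "pb' = (\<lambda>y. sin (L * s + C3) / sin C3 * (exp (- L * q * (y - 1)) * (- L * q)))"
  have h1: "\<forall>y. (pa has_real_derivative pa' y) (at y)"
    unfolding pa_def pa'_def by (auto intro!: derivative_eq_intros simp: sC0)
  have h2: "\<forall>y. (pa' has_real_derivative (- (L\<^sup>2) * (r2 + l)) * pa y) (at y)"
  proof
    fix y
    have "(pa' has_real_derivative - sin (L * s * y + C3) * (L * s) * (L * s) / sin C3) (at y)"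
      unfolding pa'_def by (auto intro!: derivative_eq_intros simp: sC0)
    moreover have "- sin (L * s * y + C3) * (L * s) * (L * s) / sin C3 = (- (L\<^sup>2) * (r2 + l)) * pa y"
    proof -
      have r2e: "r2 = s * s - l" using s2 by simp
      show ?thesis by (simp add: pa_def r2e power2_eq_square algebra_simps)
    qed
    ultimately show "(pa' has_real_derivative (- (L\<^sup>2) * (r2 + l)) * pa y) (at y)" by simp
  qed
  have h3: "\<forall>y. (pb has_real_derivative pb' y) (at y)"
    unfolding pb_def pb'_def by (auto intro!: derivative_eq_intros simp: sC0)
  have h4: "\<forall>y. (pb' has_real_derivative (- (L\<^sup>2) * (r3 + l)) * pb y) (at y)"
  proof
    fix y
    have "(pb' has_real_derivative sin (L * s + C3) / sin C3 * (exp (- L * q * (y - 1)) * (- L * q) * (- L * q))) (at y)"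
      unfolding pb'_def by (auto intro!: derivative_eq_intros simp: sC0)
    moreover have "sin (L * s + C3) / sin C3 * (exp (- L * q * (y - 1)) * (- L * q) * (- L * q)) = (- (L\<^sup>2) * (r3 + l)) * pb y"
    proof -
      have "sin (L * s + C3) / sin C3 * (exp (- L * q * (y - 1)) * (- L * q) * (- L * q)) = L * L * (q * q) * pb y"
        by (simp add: pb_def algebra_simps)
      then show ?thesis using q2 by (simp add: power2_eq_square algebra_simps)
    qed
    ultimately show "(pb' has_real_derivative (- (L\<^sup>2) * (r3 + l)) * pb y) (at y)" by simp
  qed
  have h5: "pa 0 = 1" using sC0 by (simp add: pa_def)
  have h6: "pa 1 = pb 1" by (simp add: pa_def pb_def)
  have h7: "pa' 1 = pb' 1"
  proof -
    have "pa' 1 = - sin be * (L * s) / sin C3" by (simp add: pa'_def cLC)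
    also have "\<dots> = - (q * cos be) * L / sin C3" using s by (simp add: sbe)
    also have "\<dots> = pb' 1" by (simp add: pb'_def sLC)
    finally show ?thesis .
  qed
  have h8: "\<forall>y. 0 \<le> y \<and> y \<le> 1 \<longrightarrow> pa y > 0"
  proof (intro allI impI)
    fix y :: real assume y: "0 \<le> y \<and> y \<le> 1"
    have "0 \<le> L * s * y" using y pos s by simp
    moreover have "L * s * y \<le> L * s" using y pos s by (simp add: mult_left_le)
    ultimately have "0 < L * s * y + C3" "L * s * y + C3 < pi" using C3 LC al be by linarith+
    then have "sin (L * s * y + C3) > 0" by (intro sin_gt_zero)
    then show "pa y > 0" using sC cal by (simp add: pa_def)
  qed
  have h9: "\<forall>y. 1 \<le> y \<longrightarrow> pb y > 0" using sLC sC cal cbe by (simp add: pb_def)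
  have h10: "\<forall>y. 0 \<le> y \<longrightarrow> phi1 r1 r2 r3 L y = (if y < 1 then pa y else pb y)"
  proof (intro allI impI)
    fix y :: real assume y: "0 \<le> y"
    show "phi1 r1 r2 r3 L y = (if y < 1 then pa y else pb y)"
      using LL y h5 by (auto simp: phi1_def Let_def l_def[symmetric] s_def[symmetric] q_def[symmetric] C3_def[symmetric] pa_def pb_def)
  qed
  have h11: "pa' 0 / L \<le> sqrt (- l - r1)"
  proof -
    have "pa' 0 / L = s * (sin al / cos al)" using pos by (simp add: pa'_def cC sC)
    also have "\<dots> = p" using s cal by (simp add: sal)
    finally show ?thesis by (simp add: p_def)
  qed
  show "phi_good r1 r2 r3 L (lambda1 r1 r2 r3 L) (phi1 r1 r2 r3 L)"
    unfolding phi_good_def l_def[symmetric]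
    by (rule exI[of _ pa], rule exI[of _ pa'], rule exI[of _ pb], rule exI[of _ pb'])
       (intro conjI h1 h2 h3 h4 h5 h6 h7 h8 h9 h10 h11)
qed



theorem lemma3p3:
  fixes r1 r2 r3 L M cA :: real and T :: ereal
    and A :: "real \<Rightarrow> real" and f :: "real \<Rightarrow> real \<Rightarrow> real \<Rightarrow> real"
    and r :: "real \<Rightarrow> real \<Rightarrow> real"
  assumes pos: "r1 > 0" "r2 > 0" "r3 > 0" "L > 0" "M > 0"
    and r2_gt: "r2 > max r1 r3"
    and cA: "cA > 2 * sqrt (- lambda1 r1 r2 r3 L)"
    and T: "0 < T"
    and A_cont: "continuous_on UNIV A" and A_nonneg: "\<And>t. A t \<ge> 0"
    and A_lin: "\<And>t. 0 \<le> t \<Longrightarrow> ereal t < T \<Longrightarrow> A t = cA * t"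
    and r_def: "\<And>t x. r t x = (if x < A t then r1 else if x < A t + L then r2 else r3)"
    and f_bdd: "\<And>u. \<exists>B. \<forall>t x. \<bar>f t x u\<bar> \<le> B"
    and f_C2: "\<And>t x. \<exists>f' f''. (\<forall>u. (f t x has_real_derivative f' u) (at u)
                               \<and> (f' has_real_derivative f'' u) (at u))
                            \<and> continuous_on UNIV f''"
    and f_zero: "\<And>t x. f t x 0 = 0"
    and f_deriv0: "\<And>t x. deriv (f t x) 0 = r t x"
    and f_upper: "\<And>t x u. u \<ge> 0 \<Longrightarrow> f t x u \<le> r t x * u"
    and f_lower: "\<And>t x u. u \<ge> 0 \<Longrightarrow> f t x u \<ge> r t x * u - M * u\<^sup>2"
    and f_neg: "\<And>t x u. u > 1 \<Longrightarrow> f t x u < 0"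
  shows "\<forall>C \<ge> 1. gen_supersolution (\<lambda>t x. C * ubar r1 r2 r3 L cA t x) f T"
proof (intro allI impI)
  fix C :: real assume C: "C \<ge> 1"
  define l where "l = lambda1 r1 r2 r3 L"
  have good: "- l - r1 \<ge> 0 \<and> phi_good r1 r2 r3 L l (phi1 r1 r2 r3 L)"
  proof (cases "L > Lbar r1 r2 r3")
    case True
    then show ?thesis using case1_good[OF pos(1,3,4) r2_gt True] by (simp add: l_def)
  next
    case False
    consider "r1 < r3" | "r3 < r1" | "r1 = r3" by linarith
    then show ?thesis
    proof cases
      case 1
      then show ?thesis using case2_good[OF pos(1,3,4) r2_gt 1 False] by (simp add: l_def)
    next
      case 2
      then show ?thesis using case3_good[OF pos(1,3,4) r2_gt 2 False] by (simp add: l_def)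
    next
      case 3
      then have "Lbar r1 r2 r3 = 0" by (simp add: Lbar_def)
      then show ?thesis using False pos by simp
    qed
  qed
  then obtain pa pa' pb pb' where
    h1: "\<forall>y. (pa has_real_derivative pa' y) (at y)" and
    h2: "\<forall>y. (pa' has_real_derivative (- (L\<^sup>2) * (r2 + l)) * pa y) (at y)" and
    h3: "\<forall>y. (pb has_real_derivative pb' y) (at y)" and
    h4: "\<forall>y. (pb' has_real_derivative (- (L\<^sup>2) * (r3 + l)) * pb y) (at y)" and
    h5: "pa 0 = 1" and h6: "pa 1 = pb 1" and h7: "pa' 1 = pb' 1" and
    h8: "\<forall>y. 0 \<le> y \<and> y \<le> 1 \<longrightarrow> pa y > 0" and h9: "\<forall>y. 1 \<le> y \<longrightarrow> pb y > 0" and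
    h10: "\<forall>y. 0 \<le> y \<longrightarrow> phi1 r1 r2 r3 L y = (if y < 1 then pa y else pb y)" and
    h11: "pa' 0 / L \<le> sqrt (- l - r1)"
    unfolding phi_good_def by blast
  have gl: "- l - r1 \<ge> 0" using good by simp
  define c where "c = speed_c r1 r2 r3 L cA"
  define lam where "lam = lam_c r1 c"
  have cA': "cA > 2 * sqrt (- l)" using cA by (simp add: l_def)
  have c_eq: "c = (if cA < 2 * sqrt r1 + 2 * sqrt (- l - r1) then Ffun r1 l cA else 2 * sqrt r1)"
    by (simp add: c_def speed_c_def Let_def l_def)
  note S = speed_facts[OF pos(1) gl cA' c_eq lam_def]
  have slope: "lam \<le> cA / 2 - pa' 0 / L" using S(5) h11 by linarith
  have u_eq: "(\<lambda>t x. C * ubar r1 r2 r3 L cA t x) = (\<lambda>t x. C * (if x \<le> c * t - ln 2 / lam then 2 else if x < cA * t then exp (- lam * (x - c * t))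
          else exp (- lam * (cA - c) * t) * exp (- cA * (x - cA * t) / 2) * phi1 r1 r2 r3 L ((x - cA * t) / L)))"
    unfolding ubar_def Let_def c_def lam_def by (rule refl)
  have da: "\<And>y. (pa has_real_derivative pa' y) (at y)" using h1 by blast
  have dda: "\<And>y. (pa' has_real_derivative (- (L\<^sup>2) * (r2 + l)) * pa y) (at y)" using h2 by blast
  have db: "\<And>y. (pb has_real_derivative pb' y) (at y)" using h3 by blast
  have ddb: "\<And>y. (pb' has_real_derivative (- (L\<^sup>2) * (r3 + l)) * pb y) (at y)" using h4 by blast
  have pap: "\<And>y. 0 \<le> y \<Longrightarrow> y \<le> 1 \<Longrightarrow> pa y > 0" using h8 by blast
  have pbp: "\<And>y. 1 \<le> y \<Longrightarrow> pb y > 0" using h9 by blast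
  have Ph: "\<And>y. 0 \<le> y \<Longrightarrow> phi1 r1 r2 r3 L y = (if y < 1 then pa y else pb y)" using h10 by blast
  show "gen_supersolution (\<lambda>t x. C * ubar r1 r2 r3 L cA t x) f T"
    by (rule abstract_super[where L=L and cA=cA and c=c and lam=lam
          and C=C and pa=pa and pa'=pa' and pb=pb and pb'=pb' and Phi="phi1 r1 r2 r3 L" and A=A and r=r and f=f
          and T=T and u="\<lambda>t x. C * ubar r1 r2 r3 L cA t x",
          OF pos(1) pos(4) C S(1) S(2) S(3) S(4) slope da dda db ddb h5 h6 h7 pap pbp Ph A_lin r_def f_upper f_neg u_eq])
qed

end
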